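(* Let $X\in\mathbb{R}^{m\times n}$ be fixed with rows $x^\alpha\in\mathbb{R}^n$, let $W^{\mathrm{pre}},W^{\mathrm{post}}\in\mathbb{R}^{n\times n}$ have i.i.d. $\mathcal N(0,1)$ entries, and define for tokens $\alpha,\beta$ $$\mathcal T_1^{\alpha\beta}=\frac{c\sqrt c}{n\sqrt n}\sum_{i,j=1}^nW^{\mathrm{post}}_{ji}\Big(x^\alpha_i\,\sigma_s\Big(\sum_{j'}x^\beta_{j'}W^{\mathrm{pre}}_{j'j}\Big)+x^\beta_i\,\sigma_s\Big(\sum_{j'}x^\alpha_{j'}W^{\mathrm{pre}}_{j'j}\Big)\Big).$$ Then, with expectation over the weights, $$\mathbb{E}[\mathcal T_1^{\alpha\beta}\mathcal T_1^{\delta\omega}]=V^{\alpha\delta}\sqrt{V^{\beta\beta}V^{\omega\omega}}\,cK_1(\rho^{\beta\omega})+V^{\alpha\omega}\sqrt{V^{\beta\beta}V^{\delta\delta}}\,cK_1(\rho^{\beta\delta})+V^{\beta\delta}\sqrt{V^{\alpha\alpha}V^{\omega\omega}}\,cK_1(\rho^{\alpha\omega})+V^{\beta\omega}\sqrt{V^{\alpha\alpha}V^{\delta\delta}}\,cK_1(\rho^{\alpha\delta})$$ $$=2V^{\alpha\delta}V^{\beta\omega}+2V^{\alpha\omega}V^{\beta\delta}+O(n^{-1}).$$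
   Context: $\sigma_s(x)=s_+\max(x,0)+s_-\min(x,0)$ with $s_\pm=1+c_\pm n^{-1/2}$ for constants $c_\pm\in\mathbb{R}$; $c^{-1}=\mathbb{E}\sigma_s(g)^2$, $g\sim\mathcal N(0,1)$. $V^{\alpha\beta}=\frac cn\langle x^\alpha,x^\beta\rangle$, $\rho^{\alpha\beta}=V^{\alpha\beta}(V^{\alpha\alpha}V^{\beta\beta})^{-1/2}$. $K_1(\rho)=\mathbb{E}[\sigma_s(g)\sigma_s(g')]$ where $(g,g')$ are jointly Gaussian, standard, with correlation $\rho$. $O(n^{-1})$ denotes a term whose magnitude times $n$ is bounded independently of $n$. *)

theory Defs
  imports "HOL-Probability.Probability"
begin

definition sigma_s :: "real \<Rightarrow> real \<Rightarrow> real \<Rightarrow> real" where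
  "sigma_s sp sm x = sp * max x 0 + sm * min x 0"

definition s_par :: "nat \<Rightarrow> real \<Rightarrow> real" where
  "s_par n cc = 1 + cc / sqrt (real n)"

definition gauss :: "real measure" where
  "gauss = density lborel std_normal_density"

definition c_const :: "real \<Rightarrow> real \<Rightarrow> real" where
  "c_const sp sm = 1 / (\<integral>g. (sigma_s sp sm g)^2 \<partial>gauss)"

text \<open>K_1(rho) = E[sigma_s(g) sigma_s(g')] with (g,g') standard jointly Gaussian of
  correlation rho, realised as g' = rho g + sqrt(1-rho^2) h with g,h i.i.d. N(0,1).\<close>
definition K1 :: "real \<Rightarrow> real \<Rightarrow> real \<Rightarrow> real" where
  "K1 sp sm \<rho> = (\<integral>z. sigma_s sp sm (fst z) * sigma_s sp sm (\<rho> * fst z + sqrt (1 - \<rho>^2) * snd z)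
                      \<partial>(pair_measure gauss gauss))"

text \<open>Tokens are rows X a of the data matrix; indices 0..<n.\<close>
definition Vmat :: "nat \<Rightarrow> real \<Rightarrow> (nat \<Rightarrow> nat \<Rightarrow> real) \<Rightarrow> nat \<Rightarrow> nat \<Rightarrow> real" where
  "Vmat n c X a b = c / real n * (\<Sum>i<n. X a i * X b i)"

definition rhomat :: "nat \<Rightarrow> real \<Rightarrow> (nat \<Rightarrow> nat \<Rightarrow> real) \<Rightarrow> nat \<Rightarrow> nat \<Rightarrow> real" where
  "rhomat n c X a b = Vmat n c X a b / sqrt (Vmat n c X a a * Vmat n c X b b)"

text \<open>Law of an n x n matrix with i.i.d. N(0,1) entries (entry (j,i) = W_{ji}).\<close>
definition Wlaw :: "nat \<Rightarrow> (nat \<times> nat \<Rightarrow> real) measure" where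
  "Wlaw n = PiM ({..<n} \<times> {..<n}) (\<lambda>_. gauss)"

definition T1 :: "nat \<Rightarrow> real \<Rightarrow> real \<Rightarrow> real \<Rightarrow> (nat \<Rightarrow> nat \<Rightarrow> real) \<Rightarrow> nat \<Rightarrow> nat
                  \<Rightarrow> (nat \<times> nat \<Rightarrow> real) \<Rightarrow> (nat \<times> nat \<Rightarrow> real) \<Rightarrow> real" where
  "T1 n sp sm c X a b Wpre Wpost =
     c * sqrt c / (real n * sqrt (real n)) *
     (\<Sum>i<n. \<Sum>j<n. Wpost (j, i) *
        (X a i * sigma_s sp sm (\<Sum>j'<n. X b j' * Wpre (j', j))
         + X b i * sigma_s sp sm (\<Sum>j'<n. X a j' * Wpre (j', j))))"

definition Fterm :: "nat \<Rightarrow> real \<Rightarrow> real \<Rightarrow> real \<Rightarrow> (nat \<Rightarrow> nat \<Rightarrow> real) \<Rightarrow> nat \<Rightarrow> nat \<Rightarrow> nat \<Rightarrow> nat \<Rightarrow> real" where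
  "Fterm n sp sm c X a b d w =
     (let V = Vmat n c X; \<rho> = rhomat n c X in
        V a d * sqrt (V b b * V w w) * c * K1 sp sm (\<rho> b w)
      + V a w * sqrt (V b b * V d d) * c * K1 sp sm (\<rho> b d)
      + V b d * sqrt (V a a * V w w) * c * K1 sp sm (\<rho> a w)
      + V b w * sqrt (V a a * V d d) * c * K1 sp sm (\<rho> a d))"

end

theory Submission
  imports Defs
begin

abbreviation "LL \<equiv> (lborel \<Otimes>\<^sub>M lborel :: (real \<times> real) measure)"

lemma LL_meas[measurable_dest]: "K \<in> borel_measurable borel \<Longrightarrow> K \<in> borel_measurable LL"
  by (simp add: lborel_prod)

lemma meas_aff:
  fixes K :: "real \<times> real \<Rightarrow> 'b::{second_countable_topology,topological_space}"
  assumes "K \<in> borel_measurable borel"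
  shows "(\<lambda>z::real\<times>real. K (a * fst z + b * snd z + e, c * fst z + d * snd z + f)) \<in> borel_measurable borel"
proof -
  have "(\<lambda>z::real\<times>real. (a * fst z + b * snd z + e, c * fst z + d * snd z + f)) \<in> borel_measurable borel"
    by (intro borel_measurable_continuous_onI continuous_intros)
  from measurable_compose[OF this assms] show ?thesis by (simp add: comp_def)
qed

lemma shearX:
  fixes K :: "real \<times> real \<Rightarrow> ennreal"
  assumes [measurable]: "K \<in> borel_measurable borel"
  shows "(\<integral>\<^sup>+z. K (fst z + t * snd z, snd z) \<partial>LL) = (\<integral>\<^sup>+z. K z \<partial>LL)"
proof -
  have "(\<integral>\<^sup>+z. K (fst z + t * snd z, snd z) \<partial>LL) = (\<integral>\<^sup>+y. \<integral>\<^sup>+x. K (x + t * y, y) \<partial>lborel \<partial>lborel)"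
    by (subst lborel_pair.nn_integral_snd[symmetric]) (simp_all add: case_prod_unfold)
  also have "\<dots> = (\<integral>\<^sup>+y. \<integral>\<^sup>+x. K (x, y) \<partial>lborel \<partial>lborel)"
  proof (rule nn_integral_cong)
    fix y :: real
    show "(\<integral>\<^sup>+x. K (x + t * y, y) \<partial>lborel) = (\<integral>\<^sup>+x. K (x, y) \<partial>lborel)"
      using nn_integral_real_affine[of "\<lambda>x. K (x, y)" 1 "t*y"] by (simp add: add.commute)
  qed
  also have "\<dots> = (\<integral>\<^sup>+z. K z \<partial>LL)"
    by (subst lborel_pair.nn_integral_snd[symmetric]) (simp_all add: case_prod_unfold)
  finally show ?thesis .
qed

lemma shearY:
  fixes K :: "real \<times> real \<Rightarrow> ennreal"
  assumes [measurable]: "K \<in> borel_measurable borel"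
  shows "(\<integral>\<^sup>+z. K (fst z, snd z + t * fst z) \<partial>LL) = (\<integral>\<^sup>+z. K z \<partial>LL)"
proof -
  have "(\<integral>\<^sup>+z. K (fst z, snd z + t * fst z) \<partial>LL) = (\<integral>\<^sup>+x. \<integral>\<^sup>+y. K (x, y + t * x) \<partial>lborel \<partial>lborel)"
    by (subst lborel.nn_integral_fst[symmetric]) (simp_all add: case_prod_unfold)
  also have "\<dots> = (\<integral>\<^sup>+x. \<integral>\<^sup>+y. K (x, y) \<partial>lborel \<partial>lborel)"
  proof (rule nn_integral_cong)
    fix x :: real
    show "(\<integral>\<^sup>+y. K (x, y + t * x) \<partial>lborel) = (\<integral>\<^sup>+y. K (x, y) \<partial>lborel)"
      using nn_integral_real_affine[of "\<lambda>y. K (x, y)" 1 "t*x"] by (simp add: add.commute)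
  qed
  also have "\<dots> = (\<integral>\<^sup>+z. K z \<partial>LL)"
    by (subst lborel.nn_integral_fst[symmetric]) (simp_all add: case_prod_unfold)
  finally show ?thesis .
qed

lemma reflY:
  fixes K :: "real \<times> real \<Rightarrow> ennreal"
  assumes [measurable]: "K \<in> borel_measurable borel"
  shows "(\<integral>\<^sup>+z. K (fst z, - snd z) \<partial>LL) = (\<integral>\<^sup>+z. K z \<partial>LL)"
proof -
  have "(\<integral>\<^sup>+z. K (fst z, - snd z) \<partial>LL) = (\<integral>\<^sup>+x. \<integral>\<^sup>+y. K (x, - y) \<partial>lborel \<partial>lborel)"
    by (subst lborel.nn_integral_fst[symmetric]) (simp_all add: case_prod_unfold)
  also have "\<dots> = (\<integral>\<^sup>+x. \<integral>\<^sup>+y. K (x, y) \<partial>lborel \<partial>lborel)"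
  proof (rule nn_integral_cong)
    fix x :: real
    show "(\<integral>\<^sup>+y. K (x, - y) \<partial>lborel) = (\<integral>\<^sup>+y. K (x, y) \<partial>lborel)"
      using nn_integral_real_affine[of "\<lambda>y. K (x, y)" "-1" 0] by simp
  qed
  also have "\<dots> = (\<integral>\<^sup>+z. K z \<partial>LL)"
    by (subst lborel.nn_integral_fst[symmetric]) (simp_all add: case_prod_unfold)
  finally show ?thesis .
qed

lemma rotL_aux:
  fixes K :: "real \<times> real \<Rightarrow> ennreal"
  assumes [measurable]: "K \<in> borel_measurable borel" and cs: "c\<^sup>2 + s\<^sup>2 = 1" and c: "c \<noteq> -1"
  shows "(\<integral>\<^sup>+z. K (c * fst z - s * snd z, s * fst z + c * snd z) \<partial>LL) = (\<integral>\<^sup>+z. K z \<partial>LL)"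
proof -
  define t where "t = s / (1 + c)"
  have c1: "1 + c \<noteq> 0" using c by (metis add.commute add_eq_0_iff2)
  have ts: "t * s = 1 - c" unfolding t_def using cs c1
    by (simp add: field_simps power2_eq_square)
  have e1: "1 - t * s = c" using ts by simp
  have e2: "2 * t - s * t * t = s" 
  proof -
    have "2 * t - s * t * t = t * (2 - t * s)" by (simp add: algebra_simps)
    also have "\<dots> = t * (1 + c)" using ts by simp
    also have "\<dots> = s" using c1 unfolding t_def by simp
    finally show ?thesis .
  qed
  define K1 where "K1 = (\<lambda>z. K (fst z - t * snd z, snd z))"
  define K2 where "K2 = (\<lambda>z. K1 (fst z, snd z + s * fst z))"
  have [measurable]: "K1 \<in> borel_measurable borel"
    unfolding K1_def using meas_aff[OF assms(1), of 1 "-t" 0 0 1 0] by simp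
  have [measurable]: "K2 \<in> borel_measurable borel"
    unfolding K2_def using meas_aff[of K1 1 0 0 s 1 0] by (simp add: add.commute)
  have pt: "K (c * fst z - s * snd z, s * fst z + c * snd z) = K2 (fst z - t * snd z, snd z)" for z
  proof -
    have "c * fst z - s * snd z = (fst z - t * snd z) - t * (snd z + s * (fst z - t * snd z))"
    proof -
      have "(fst z - t * snd z) - t * (snd z + s * (fst z - t * snd z)) = (1 - t * s) * fst z - (2 * t - s * t * t) * snd z"
        by (simp add: algebra_simps)
      then show ?thesis by (simp only: e1 e2)
    qed
    moreover have "s * fst z + c * snd z = snd z + s * (fst z - t * snd z)"
    proof -
      have "snd z + s * (fst z - t * snd z) = s * fst z + (1 - t * s) * snd z"
        by (simp add: algebra_simps)
      then show ?thesis by (simp only: e1)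
    qed
    ultimately show ?thesis unfolding K2_def K1_def by simp
  qed
  have "(\<integral>\<^sup>+z. K (c * fst z - s * snd z, s * fst z + c * snd z) \<partial>LL) = (\<integral>\<^sup>+z. K2 (fst z + (-t) * snd z, snd z) \<partial>LL)"
    by (simp add: pt)
  also have "\<dots> = (\<integral>\<^sup>+z. K2 z \<partial>LL)" by (rule shearX) simp
  also have "\<dots> = (\<integral>\<^sup>+z. K1 z \<partial>LL)" unfolding K2_def by (rule shearY) simp
  also have "\<dots> = (\<integral>\<^sup>+z. K z \<partial>LL)" unfolding K1_def using shearX[of K "-t"] by simp
  finally show ?thesis .
qed

lemma rotL:
  fixes K :: "real \<times> real \<Rightarrow> ennreal"
  assumes [measurable]: "K \<in> borel_measurable borel" and cs: "c\<^sup>2 + s\<^sup>2 = 1"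
  shows "(\<integral>\<^sup>+z. K (c * fst z - s * snd z, s * fst z + c * snd z) \<partial>LL) = (\<integral>\<^sup>+z. K z \<partial>LL)"
proof (cases "c = -1")
  case False then show ?thesis using rotL_aux[OF assms] by simp
next
  case True
  then have s: "s = 0" using cs by simp
  define K' where "K' = (\<lambda>z. K (- snd z, fst z))"
  have [measurable]: "K' \<in> borel_measurable borel"
    unfolding K'_def using meas_aff[OF assms(1), of 0 "-1" 0 1 0 0] by simp
  have "(\<integral>\<^sup>+z. K' z \<partial>LL) = (\<integral>\<^sup>+z. K z \<partial>LL)"
    using rotL_aux[OF assms(1), of 0 1] unfolding K'_def by simp
  moreover have "(\<integral>\<^sup>+z. K' (- snd z, fst z) \<partial>LL) = (\<integral>\<^sup>+z. K' z \<partial>LL)"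
    using rotL_aux[of K' 0 1] by simp
  ultimately show ?thesis using True s unfolding K'_def by simp
qed

abbreviation "G2 \<equiv> (gauss \<Otimes>\<^sub>M gauss)"

definition psi2 :: "real \<times> real \<Rightarrow> ennreal" where
  "psi2 z = ennreal (std_normal_density (fst z) * std_normal_density (snd z))"

lemma psi2_meas[measurable]: "psi2 \<in> borel_measurable borel"
  unfolding psi2_def std_normal_density_def
  by (intro measurable_compose[OF _ measurable_ennreal] borel_measurable_continuous_onI continuous_intros) auto

lemma psi2_eq: "psi2 z = ennreal (exp (- ((fst z)\<^sup>2 + (snd z)\<^sup>2) / 2) / (2 * pi))"
proof -
  have "sqrt (2 * pi) * sqrt (2 * pi) = 2 * pi" by simp
  then show ?thesis unfolding psi2_def std_normal_density_def by (simp add: exp_add[symmetric] field_simps)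
qed

lemma prob_gauss: "prob_space gauss"
  unfolding gauss_def by (rule prob_space_normal_density) simp

lemma sets_gauss[simp, measurable_cong]: "sets gauss = sets borel"
  unfolding gauss_def by simp

lemma space_gauss[simp]: "space gauss = UNIV"
  unfolding gauss_def by simp

lemma G2_density: "G2 = density LL psi2"
proof -
  interpret p: prob_space gauss by (rule prob_gauss)
  have "G2 = density LL (\<lambda>(x,y). ennreal (std_normal_density x) * ennreal (std_normal_density y))"
    unfolding gauss_def
    by (rule pair_measure_density) (auto intro: sigma_finite_lborel p.sigma_finite_measure[unfolded gauss_def])
  also have "\<dots> = density LL psi2"
    by (rule density_cong) (auto simp: psi2_def ennreal_mult' case_prod_unfold)
  finally show ?thesis .
qed

lemma rotG:
  fixes H :: "real \<times> real \<Rightarrow> ennreal"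
  assumes [measurable]: "H \<in> borel_measurable borel" and cs: "c\<^sup>2 + s\<^sup>2 = 1"
  shows "(\<integral>\<^sup>+z. H (c * fst z - s * snd z, s * fst z + c * snd z) \<partial>G2) = (\<integral>\<^sup>+z. H z \<partial>G2)"
proof -
  have inv: "psi2 (c * fst z - s * snd z, s * fst z + c * snd z) = psi2 z" for z
  proof -
    have "(c * fst z - s * snd z)\<^sup>2 + (s * fst z + c * snd z)\<^sup>2 = (c\<^sup>2 + s\<^sup>2) * ((fst z)\<^sup>2 + (snd z)\<^sup>2)"
      by (simp add: power2_eq_square algebra_simps)
    then show ?thesis using cs by (simp add: psi2_eq)
  qed
  define K where "K = (\<lambda>z. psi2 z * H z)"
  have [measurable]: "K \<in> borel_measurable borel" unfolding K_def by measurable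
  have "(\<integral>\<^sup>+z. H (c * fst z - s * snd z, s * fst z + c * snd z) \<partial>G2)
      = (\<integral>\<^sup>+z. K (c * fst z - s * snd z, s * fst z + c * snd z) \<partial>LL)"
    unfolding G2_density K_def
    by (subst nn_integral_density) (auto simp: inv intro!: measurable_compose[OF _ assms(1)] borel_measurable_continuous_onI continuous_intros)
  also have "\<dots> = (\<integral>\<^sup>+z. K z \<partial>LL)" by (rule rotL[OF _ cs]) simp
  also have "\<dots> = (\<integral>\<^sup>+z. H z \<partial>G2)"
    unfolding G2_density K_def by (subst nn_integral_density) auto
  finally show ?thesis .
qed

lemma reflG:
  fixes H :: "real \<times> real \<Rightarrow> ennreal"
  assumes [measurable]: "H \<in> borel_measurable borel"
  shows "(\<integral>\<^sup>+z. H (fst z, - snd z) \<partial>G2) = (\<integral>\<^sup>+z. H z \<partial>G2)"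
proof -
  have inv: "psi2 (fst z, - snd z) = psi2 z" for z by (simp add: psi2_eq)
  define K where "K = (\<lambda>z. psi2 z * H z)"
  have [measurable]: "K \<in> borel_measurable borel" unfolding K_def by measurable
  have "(\<integral>\<^sup>+z. H (fst z, - snd z) \<partial>G2) = (\<integral>\<^sup>+z. K (fst z, - snd z) \<partial>LL)"
    unfolding G2_density K_def
    by (subst nn_integral_density) (auto simp: inv intro!: measurable_compose[OF _ assms(1)] borel_measurable_continuous_onI continuous_intros)
  also have "\<dots> = (\<integral>\<^sup>+z. K z \<partial>LL)" by (rule reflY) simp
  also have "\<dots> = (\<integral>\<^sup>+z. H z \<partial>G2)"
    unfolding G2_density K_def by (subst nn_integral_density) auto
  finally show ?thesis .
qed

lemma rotG':
  fixes H F :: "real \<times> real \<Rightarrow> ennreal"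
  assumes "H \<in> borel_measurable borel" and cs: "c\<^sup>2 + s\<^sup>2 = 1"
    and "\<And>z. H (c * fst z - s * snd z, s * fst z + c * snd z) = F z"
  shows "(\<integral>\<^sup>+z. H z \<partial>G2) = (\<integral>\<^sup>+z. F z \<partial>G2)"
  using rotG[OF assms(1,2)] assms(3) by simp

lemma chol2:
  fixes F :: "real \<times> real \<Rightarrow> ennreal"
  assumes Fm: "F \<in> borel_measurable borel"
  shows "(\<integral>\<^sup>+z. F (p * fst z + q * snd z, r * fst z + s * snd z) \<partial>G2)
       = (\<integral>\<^sup>+z. F (sqrt (p\<^sup>2 + q\<^sup>2) * fst z,
                   (p * r + q * s) / sqrt (p\<^sup>2 + q\<^sup>2) * fst z
                   + sqrt (r\<^sup>2 + s\<^sup>2 - ((p * r + q * s) / sqrt (p\<^sup>2 + q\<^sup>2))\<^sup>2) * snd z) \<partial>G2)"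
proof -
  define \<rho> where "\<rho> = sqrt (p\<^sup>2 + q\<^sup>2)"
  define \<beta> where "\<beta> = (p * r + q * s) / \<rho>"
  define \<gamma> where "\<gamma> = sqrt (r\<^sup>2 + s\<^sup>2 - \<beta>\<^sup>2)"
  define H where "H = (\<lambda>z. F (p * fst z + q * snd z, r * fst z + s * snd z))"
  have Hm: "H \<in> borel_measurable borel" unfolding H_def using meas_aff[OF Fm, of p q 0 r s 0] by simp
  have "(\<integral>\<^sup>+z. H z \<partial>G2) = (\<integral>\<^sup>+z. F (\<rho> * fst z, \<beta> * fst z + \<gamma> * snd z) \<partial>G2)"
  proof (cases "\<rho> = 0")
    case True
    then have pq: "p = 0" "q = 0" unfolding \<rho>_def by (auto simp: power2_eq_square add_nonneg_eq_0_iff)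
    then have b0: "\<beta> = 0" unfolding \<beta>_def by simp
    define \<tau> where "\<tau> = sqrt (r\<^sup>2 + s\<^sup>2)"
    have g: "\<gamma> = \<tau>" unfolding \<gamma>_def \<tau>_def b0 by simp
    show ?thesis
    proof (cases "\<tau> = 0")
      case True
      then have "r = 0" "s = 0" unfolding \<tau>_def by (auto simp: power2_eq_square add_nonneg_eq_0_iff)
      then show ?thesis using pq b0 g True \<open>\<rho> = 0\<close> unfolding H_def by simp
    next
      case False
      have h1: "r\<^sup>2 + s\<^sup>2 \<noteq> 0" using False unfolding \<tau>_def by auto
      have h2: "r\<^sup>2 + s\<^sup>2 \<ge> 0" by simp
      have h3: "r\<^sup>2 + s\<^sup>2 > 0" using h1 h2 by linarith
      have tpos: "\<tau> > 0" unfolding \<tau>_def using h3 by (rule real_sqrt_gt_zero)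
      have tt: "\<tau>\<^sup>2 = r\<^sup>2 + s\<^sup>2" unfolding \<tau>_def by simp
      show ?thesis
      proof (rule rotG'[OF Hm, of "s / \<tau>" "- r / \<tau>"])
        have "(s / \<tau>)\<^sup>2 + (- r / \<tau>)\<^sup>2 = (r\<^sup>2 + s\<^sup>2) / \<tau>\<^sup>2" by (simp add: power_divide add_divide_distrib)
        also have "\<dots> = \<tau>\<^sup>2 / \<tau>\<^sup>2" by (simp only: tt)
        also have "\<dots> = 1" using tpos by simp
        finally show "(s / \<tau>)\<^sup>2 + (- r / \<tau>)\<^sup>2 = 1" .
      next
        fix z :: "real \<times> real"
        have e0: "r * (s / \<tau> * fst z - - r / \<tau> * snd z) + s * (- r / \<tau> * fst z + s / \<tau> * snd z) = (r\<^sup>2 + s\<^sup>2) / \<tau> * snd z"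
          by (simp add: field_simps power2_eq_square add_divide_distrib)
        have e00: "(r\<^sup>2 + s\<^sup>2) / \<tau> = \<tau>" using tpos by (simp only: tt[symmetric]) (simp add: power2_eq_square)
        have e1: "r * (s / \<tau> * fst z - - r / \<tau> * snd z) + s * (- r / \<tau> * fst z + s / \<tau> * snd z) = \<tau> * snd z"
          using e0 e00 by simp
        show "H (s / \<tau> * fst z - - r / \<tau> * snd z, - r / \<tau> * fst z + s / \<tau> * snd z) = F (\<rho> * fst z, \<beta> * fst z + \<gamma> * snd z)"
          unfolding H_def using pq e1 b0 g \<open>\<rho> = 0\<close> by simp
      qed
    qed
  next
    case False
    have h1: "p\<^sup>2 + q\<^sup>2 \<noteq> 0" using False unfolding \<rho>_def by auto
    have h2: "p\<^sup>2 + q\<^sup>2 \<ge> 0" by simp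
    have h3: "p\<^sup>2 + q\<^sup>2 > 0" using h1 h2 by linarith
    have rpos: "\<rho> > 0" unfolding \<rho>_def using h3 by (rule real_sqrt_gt_zero)
    have rr: "\<rho>\<^sup>2 = p\<^sup>2 + q\<^sup>2" unfolding \<rho>_def by simp
    define \<delta> where "\<delta> = (p * s - q * r) / \<rho>"
    have lag: "\<delta>\<^sup>2 = r\<^sup>2 + s\<^sup>2 - \<beta>\<^sup>2"
    proof -
      have "\<delta>\<^sup>2 + \<beta>\<^sup>2 = ((p * s - q * r)\<^sup>2 + (p * r + q * s)\<^sup>2) / \<rho>\<^sup>2"
        unfolding \<delta>_def \<beta>_def power_divide by (rule add_divide_distrib[symmetric])
      also have "(p * s - q * r)\<^sup>2 + (p * r + q * s)\<^sup>2 = (p\<^sup>2 + q\<^sup>2) * (r\<^sup>2 + s\<^sup>2)"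
        by (simp add: power2_eq_square algebra_simps)
      also have "\<dots> = \<rho>\<^sup>2 * (r\<^sup>2 + s\<^sup>2)" by (simp only: rr)
      also have "\<dots> / \<rho>\<^sup>2 = r\<^sup>2 + s\<^sup>2" using rpos by simp
      finally show ?thesis by simp
    qed
    have nn: "r\<^sup>2 + s\<^sup>2 - \<beta>\<^sup>2 \<ge> 0" using lag[symmetric] by simp
    have step: "(\<integral>\<^sup>+z. H z \<partial>G2) = (\<integral>\<^sup>+z. F (\<rho> * fst z, \<beta> * fst z + \<delta> * snd z) \<partial>G2)"
    proof (rule rotG'[OF Hm, of "p / \<rho>" "q / \<rho>"])
        have "(p / \<rho>)\<^sup>2 + (q / \<rho>)\<^sup>2 = (p\<^sup>2 + q\<^sup>2) / \<rho>\<^sup>2" by (simp add: power_divide add_divide_distrib)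
        also have "\<dots> = \<rho>\<^sup>2 / \<rho>\<^sup>2" by (simp only: rr)
        also have "\<dots> = 1" using rpos by simp
        finally show "(p / \<rho>)\<^sup>2 + (q / \<rho>)\<^sup>2 = 1" .
    next
      fix z :: "real \<times> real"
      have e0: "p * (p / \<rho> * fst z - q / \<rho> * snd z) + q * (q / \<rho> * fst z + p / \<rho> * snd z) = (p\<^sup>2 + q\<^sup>2) / \<rho> * fst z"
        by (simp add: field_simps power2_eq_square add_divide_distrib)
      have e00: "(p\<^sup>2 + q\<^sup>2) / \<rho> = \<rho>" using rpos by (simp only: rr[symmetric]) (simp add: power2_eq_square)
      have e1: "p * (p / \<rho> * fst z - q / \<rho> * snd z) + q * (q / \<rho> * fst z + p / \<rho> * snd z) = \<rho> * fst z"
        using e0 e00 by simp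
      have e2: "r * (p / \<rho> * fst z - q / \<rho> * snd z) + s * (q / \<rho> * fst z + p / \<rho> * snd z) = \<beta> * fst z + \<delta> * snd z"
        unfolding \<beta>_def \<delta>_def using rpos by (simp add: field_simps)
      show "H (p / \<rho> * fst z - q / \<rho> * snd z, q / \<rho> * fst z + p / \<rho> * snd z) = F (\<rho> * fst z, \<beta> * fst z + \<delta> * snd z)"
        unfolding H_def using e1 e2 by simp
    qed
    show ?thesis
    proof (cases "\<delta> \<ge> 0")
      case True
      then have "\<delta> = \<gamma>" unfolding \<gamma>_def using lag by (metis real_sqrt_unique)
      then show ?thesis using step by simp
    next
      case False
      have "\<gamma> = sqrt (\<delta>\<^sup>2)" unfolding \<gamma>_def using lag by simp
      also have "\<dots> = - \<delta>" using False by simp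
      finally have dg: "\<delta> = - \<gamma>" by simp
      have Km: "(\<lambda>z. F (\<rho> * fst z, \<beta> * fst z + \<gamma> * snd z)) \<in> borel_measurable borel"
        using meas_aff[OF Fm, of \<rho> 0 0 \<beta> \<gamma> 0] by simp
      show ?thesis using step reflG[OF Km] dg by simp
    qed
  qed
  then show ?thesis unfolding H_def \<rho>_def \<beta>_def \<gamma>_def .
qed

interpretation gs: prob_space gauss by (rule prob_gauss)
interpretation gp: pair_prob_space gauss gauss ..

lemma G2_meas: "K \<in> borel_measurable borel \<Longrightarrow> K \<in> borel_measurable G2"
proof -
  assume a: "K \<in> borel_measurable borel"
  have "sets G2 = sets (borel \<Otimes>\<^sub>M borel :: (real\<times>real) measure)"
    by (rule sets_pair_measure_cong) simp_all
  also have "\<dots> = sets (borel :: (real\<times>real) measure)" by (simp only: borel_prod)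
  finally have s: "sets G2 = sets (borel :: (real\<times>real) measure)" .
  show ?thesis using a measurable_cong_sets[OF s refl] by blast
qed

lemma G2_iter:
  fixes H :: "real \<times> real \<Rightarrow> ennreal"
  assumes "H \<in> borel_measurable borel"
  shows "(\<integral>\<^sup>+z. H z \<partial>G2) = (\<integral>\<^sup>+a. \<integral>\<^sup>+b. H (a, b) \<partial>gauss \<partial>gauss)"
  using gs.nn_integral_fst[of H gauss] G2_meas[OF assms] by simp

lemma meas_lin:
  fixes K :: "real \<times> real \<Rightarrow> 'b::{second_countable_topology,topological_space}"
  assumes "K \<in> borel_measurable borel"
  shows "(\<lambda>z::real\<times>real. K (a * fst z + b * snd z, c * fst z + d * snd z)) \<in> borel_measurable borel"
  using meas_aff[OF assms, of a b 0 c d 0] by simp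

lemma chol2i:
  fixes F :: "real \<times> real \<Rightarrow> ennreal"
  assumes Fm: "F \<in> borel_measurable borel"
  shows "(\<integral>\<^sup>+a. \<integral>\<^sup>+b. F (p * a + q * b, r * a + s * b) \<partial>gauss \<partial>gauss)
       = (\<integral>\<^sup>+a. \<integral>\<^sup>+b. F (sqrt (p\<^sup>2 + q\<^sup>2) * a,
                   (p * r + q * s) / sqrt (p\<^sup>2 + q\<^sup>2) * a
                   + sqrt (r\<^sup>2 + s\<^sup>2 - ((p * r + q * s) / sqrt (p\<^sup>2 + q\<^sup>2))\<^sup>2) * b) \<partial>gauss \<partial>gauss)"
proof -
  define A where "A = sqrt (p\<^sup>2 + q\<^sup>2)"
  define B where "B = (p * r + q * s) / sqrt (p\<^sup>2 + q\<^sup>2)"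
  define C where "C = sqrt (r\<^sup>2 + s\<^sup>2 - ((p * r + q * s) / sqrt (p\<^sup>2 + q\<^sup>2))\<^sup>2)"
  have 1: "(\<integral>\<^sup>+a. \<integral>\<^sup>+b. F (p * a + q * b, r * a + s * b) \<partial>gauss \<partial>gauss)
     = (\<integral>\<^sup>+z. F (p * fst z + q * snd z, r * fst z + s * snd z) \<partial>G2)"
    using G2_iter[OF meas_lin[OF Fm, of p q r s]] by (simp only: fst_conv snd_conv)
  have 2: "(\<integral>\<^sup>+a. \<integral>\<^sup>+b. F (A * a, B * a + C * b) \<partial>gauss \<partial>gauss)
     = (\<integral>\<^sup>+z. F (A * fst z + 0 * snd z, B * fst z + C * snd z) \<partial>G2)"
    using G2_iter[OF meas_lin[OF Fm, of A 0 B C]] by (simp only: fst_conv snd_conv mult_zero_left add_0_right)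
  have 3: "(\<integral>\<^sup>+z. F (A * fst z + 0 * snd z, B * fst z + C * snd z) \<partial>G2) = (\<integral>\<^sup>+z. F (A * fst z, B * fst z + C * snd z) \<partial>G2)"
    by (simp only: mult_zero_left add_0_right)
  have 4: "(\<integral>\<^sup>+z. F (p * fst z + q * snd z, r * fst z + s * snd z) \<partial>G2) = (\<integral>\<^sup>+z. F (A * fst z, B * fst z + C * snd z) \<partial>G2)"
    unfolding A_def B_def C_def by (rule chol2[OF Fm])
  have "(\<integral>\<^sup>+a. \<integral>\<^sup>+b. F (p * a + q * b, r * a + s * b) \<partial>gauss \<partial>gauss) = (\<integral>\<^sup>+a. \<integral>\<^sup>+b. F (A * a, B * a + C * b) \<partial>gauss \<partial>gauss)"
    using 1 4 3 2 by simp
  then show ?thesis unfolding A_def B_def C_def .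
qed


lemma gauss_UNIV[simp]: "emeasure gauss UNIV = 1"
  using gs.emeasure_space_1 by simp

lemma borel_pair_meas: "F \<in> borel_measurable (borel :: (real \<times> real) measure) \<Longrightarrow> F \<in> borel_measurable (borel \<Otimes>\<^sub>M borel)"
  by (simp only: borel_prod)

lemma K3:
  fixes F :: "real \<times> real \<Rightarrow> ennreal" and x y \<alpha> \<beta> \<gamma> :: real
  assumes Fm: "F \<in> borel_measurable borel"
  defines "\<alpha>' \<equiv> sqrt (x\<^sup>2 + \<alpha>\<^sup>2)"
  defines "\<beta>' \<equiv> (x * y + \<alpha> * \<beta>) / \<alpha>'"
  defines "\<gamma>'' \<equiv> sqrt (\<gamma>\<^sup>2 + (y\<^sup>2 + \<beta>\<^sup>2 - \<beta>'\<^sup>2))"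
  shows "(\<integral>\<^sup>+t. \<integral>\<^sup>+a. \<integral>\<^sup>+b. F (x * t + \<alpha> * a, y * t + \<beta> * a + \<gamma> * b) \<partial>gauss \<partial>gauss \<partial>gauss)
       = (\<integral>\<^sup>+t. \<integral>\<^sup>+a. F (\<alpha>' * t, \<beta>' * t + \<gamma>'' * a) \<partial>gauss \<partial>gauss)"
proof -
  note Fm2[measurable] = borel_pair_meas[OF Fm]
  define \<gamma>' where "\<gamma>' = sqrt (y\<^sup>2 + \<beta>\<^sup>2 - \<beta>'\<^sup>2)"
  have "(\<integral>\<^sup>+t. \<integral>\<^sup>+a. \<integral>\<^sup>+b. F (x * t + \<alpha> * a, y * t + \<beta> * a + \<gamma> * b) \<partial>gauss \<partial>gauss \<partial>gauss)
      = (\<integral>\<^sup>+t. \<integral>\<^sup>+b. \<integral>\<^sup>+a. F (x * t + \<alpha> * a, y * t + \<beta> * a + \<gamma> * b) \<partial>gauss \<partial>gauss \<partial>gauss)"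
    by (rule nn_integral_cong, rule gp.Fubini') measurable
  also have "\<dots> = (\<integral>\<^sup>+b. \<integral>\<^sup>+t. \<integral>\<^sup>+a. F (x * t + \<alpha> * a, y * t + \<beta> * a + \<gamma> * b) \<partial>gauss \<partial>gauss \<partial>gauss)"
    by (rule gp.Fubini'[symmetric]) measurable
  also have "\<dots> = (\<integral>\<^sup>+b. \<integral>\<^sup>+t. \<integral>\<^sup>+a. F (\<alpha>' * t, \<beta>' * t + \<gamma>' * a + \<gamma> * b) \<partial>gauss \<partial>gauss \<partial>gauss)"
  proof (rule nn_integral_cong)
    fix b :: real
    define Fb where "Fb = (\<lambda>z::real\<times>real. F (fst z, snd z + \<gamma> * b))"
    have Fbm: "Fb \<in> borel_measurable borel" unfolding Fb_def using meas_aff[OF Fm, of 1 0 0 0 1 "\<gamma> * b"] by simp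
    have "(\<integral>\<^sup>+t. \<integral>\<^sup>+a. Fb (x * t + \<alpha> * a, y * t + \<beta> * a) \<partial>gauss \<partial>gauss)
        = (\<integral>\<^sup>+t. \<integral>\<^sup>+a. Fb (\<alpha>' * t, \<beta>' * t + \<gamma>' * a) \<partial>gauss \<partial>gauss)"
      unfolding \<alpha>'_def \<beta>'_def \<gamma>'_def by (rule chol2i[OF Fbm])
    then show "(\<integral>\<^sup>+t. \<integral>\<^sup>+a. F (x * t + \<alpha> * a, y * t + \<beta> * a + \<gamma> * b) \<partial>gauss \<partial>gauss)
        = (\<integral>\<^sup>+t. \<integral>\<^sup>+a. F (\<alpha>' * t, \<beta>' * t + \<gamma>' * a + \<gamma> * b) \<partial>gauss \<partial>gauss)"
      unfolding Fb_def by simp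
  qed
  also have "\<dots> = (\<integral>\<^sup>+t. \<integral>\<^sup>+b. \<integral>\<^sup>+a. F (\<alpha>' * t, \<beta>' * t + \<gamma>' * a + \<gamma> * b) \<partial>gauss \<partial>gauss \<partial>gauss)"
    by (rule gp.Fubini') measurable
  also have "\<dots> = (\<integral>\<^sup>+t. \<integral>\<^sup>+b. \<integral>\<^sup>+a. F (\<alpha>' * t, \<beta>' * t + \<gamma>'' * a) \<partial>gauss \<partial>gauss \<partial>gauss)"
  proof (rule nn_integral_cong)
    fix t :: real
    define Ft where "Ft = (\<lambda>z::real\<times>real. F (\<alpha>' * t, \<beta>' * t + snd z))"
    have Ftm: "Ft \<in> borel_measurable borel" unfolding Ft_def using meas_aff[OF Fm, of 0 0 "\<alpha>' * t" 0 1 "\<beta>' * t"] by (simp add: add.commute)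
    have "(\<integral>\<^sup>+b. \<integral>\<^sup>+a. Ft (0 * b + 0 * a, \<gamma> * b + \<gamma>' * a) \<partial>gauss \<partial>gauss)
        = (\<integral>\<^sup>+b. \<integral>\<^sup>+a. Ft (sqrt (0\<^sup>2 + 0\<^sup>2) * b, (0 * \<gamma> + 0 * \<gamma>') / sqrt (0\<^sup>2 + 0\<^sup>2) * b
              + sqrt (\<gamma>\<^sup>2 + \<gamma>'\<^sup>2 - ((0 * \<gamma> + 0 * \<gamma>') / sqrt (0\<^sup>2 + 0\<^sup>2))\<^sup>2) * a) \<partial>gauss \<partial>gauss)"
      by (rule chol2i[OF Ftm])
    moreover have "\<gamma>'' = sqrt (\<gamma>\<^sup>2 + \<gamma>'\<^sup>2)"
    proof -
      have "(\<alpha> * \<beta> + x * y)\<^sup>2 \<le> (\<alpha>\<^sup>2 + x\<^sup>2) * (\<beta>\<^sup>2 + y\<^sup>2)"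
      proof -
        have "0 \<le> (\<alpha> * y - x * \<beta>)\<^sup>2" by simp
        then show ?thesis by (simp add: power2_eq_square algebra_simps)
      qed
      moreover have D: "\<beta>'\<^sup>2 = (\<alpha> * \<beta> + x * y)\<^sup>2 / (\<alpha>\<^sup>2 + x\<^sup>2)"
        unfolding \<beta>'_def \<alpha>'_def power_divide by (simp add: add.commute)
      ultimately have "\<beta>'\<^sup>2 \<le> y\<^sup>2 + \<beta>\<^sup>2"
      proof (cases "\<alpha>\<^sup>2 + x\<^sup>2 = 0")
        case True then show ?thesis using D by simp
      next
        case False
        then have "\<alpha>\<^sup>2 + x\<^sup>2 > 0" by (metis add_nonneg_nonneg less_eq_real_def zero_le_power2)
        then show ?thesis using D \<open>(\<alpha> * \<beta> + x * y)\<^sup>2 \<le> (\<alpha>\<^sup>2 + x\<^sup>2) * (\<beta>\<^sup>2 + y\<^sup>2)\<close>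
          by (simp add: pos_divide_le_eq add.commute mult.commute)
      qed
      then show ?thesis unfolding \<gamma>''_def \<gamma>'_def by simp
    qed
    ultimately show "(\<integral>\<^sup>+b. \<integral>\<^sup>+a. F (\<alpha>' * t, \<beta>' * t + \<gamma>' * a + \<gamma> * b) \<partial>gauss \<partial>gauss)
        = (\<integral>\<^sup>+b. \<integral>\<^sup>+a. F (\<alpha>' * t, \<beta>' * t + \<gamma>'' * a) \<partial>gauss \<partial>gauss)"
      unfolding Ft_def by (simp add: ac_simps)
  qed
  also have "\<dots> = (\<integral>\<^sup>+t. \<integral>\<^sup>+a. F (\<alpha>' * t, \<beta>' * t + \<gamma>'' * a) \<partial>gauss \<partial>gauss)"
    by (simp add: nn_integral_const gs.emeasure_space_1)
  finally show ?thesis .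
qed


definition Can :: "(real \<times> real \<Rightarrow> ennreal) \<Rightarrow> real \<Rightarrow> real \<Rightarrow> real \<Rightarrow> ennreal" where
  "Can F \<alpha> \<beta> \<gamma> = (\<integral>\<^sup>+a. \<integral>\<^sup>+b. F (\<alpha> * a, \<beta> * a + \<gamma> * b) \<partial>gauss \<partial>gauss)"

lemma cs_aux:
  fixes x y \<alpha> \<beta> :: real
  shows "((x * y + \<alpha> * \<beta>) / sqrt (x\<^sup>2 + \<alpha>\<^sup>2))\<^sup>2 \<le> y\<^sup>2 + \<beta>\<^sup>2"
proof -
  have C: "(\<alpha> * \<beta> + x * y)\<^sup>2 \<le> (\<alpha>\<^sup>2 + x\<^sup>2) * (\<beta>\<^sup>2 + y\<^sup>2)"
  proof -
    have "0 \<le> (\<alpha> * y - x * \<beta>)\<^sup>2" by simp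
    then show ?thesis by (simp add: power2_eq_square algebra_simps)
  qed
  have D: "((x * y + \<alpha> * \<beta>) / sqrt (x\<^sup>2 + \<alpha>\<^sup>2))\<^sup>2 = (\<alpha> * \<beta> + x * y)\<^sup>2 / (\<alpha>\<^sup>2 + x\<^sup>2)"
    unfolding power_divide by (simp add: add.commute)
  show ?thesis
  proof (cases "\<alpha>\<^sup>2 + x\<^sup>2 = 0")
    case True then show ?thesis using D by simp
  next
    case False
    then have "\<alpha>\<^sup>2 + x\<^sup>2 > 0" by (metis add_nonneg_nonneg less_eq_real_def zero_le_power2)
    then show ?thesis using D C by (simp add: pos_divide_le_eq add.commute mult.commute)
  qed
qed

lemma gauss_psf: "product_sigma_finite (\<lambda>_::'i. gauss)"
  by (simp add: product_sigma_finite_def gs.sigma_finite_measure)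

lemma gauss_pps: "prob_space (PiM I (\<lambda>_::'i. gauss))"
  by (rule prob_space_PiM) (rule prob_gauss)

lemma sum_meas:
  fixes x :: "'i \<Rightarrow> real"
  assumes "I \<subseteq> J"
  shows "(\<lambda>W. \<Sum>j\<in>I. x j * W j) \<in> borel_measurable (PiM J (\<lambda>_. gauss))"
proof (rule borel_measurable_sum)
  fix j assume "j \<in> I"
  then have "j \<in> J" using assms by auto
  then have "(\<lambda>W. W j) \<in> measurable (PiM J (\<lambda>_. gauss)) gauss" by (rule measurable_component_singleton)
  then have "(\<lambda>W. W j) \<in> borel_measurable (PiM J (\<lambda>_. gauss))"
    by (simp add: measurable_cong_sets[OF refl sets_gauss])
  then show "(\<lambda>W. x j * W j) \<in> borel_measurable (PiM J (\<lambda>_. gauss))" by measurable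
qed

lemma gvec:
  fixes I :: "'i set" and x y :: "'i \<Rightarrow> real"
  assumes "finite I"
  shows "\<exists>\<alpha> \<beta> \<gamma>. \<alpha> \<ge> 0 \<and> \<gamma> \<ge> 0 \<and> \<alpha>\<^sup>2 = (\<Sum>i\<in>I. (x i)\<^sup>2) \<and> \<alpha> * \<beta> = (\<Sum>i\<in>I. x i * y i)
     \<and> \<beta>\<^sup>2 + \<gamma>\<^sup>2 = (\<Sum>i\<in>I. (y i)\<^sup>2)
     \<and> (\<forall>F. F \<in> borel_measurable borel \<longrightarrow>
          (\<integral>\<^sup>+W. F (\<Sum>i\<in>I. x i * W i, \<Sum>i\<in>I. y i * W i) \<partial>PiM I (\<lambda>_. gauss)) = Can F \<alpha> \<beta> \<gamma>)"
  using assms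
proof (induction I rule: finite_induct)
  case empty
  interpret P: prob_space "PiM {} (\<lambda>_::'i. gauss)" by (rule gauss_pps)
  show ?case
    by (rule exI[of _ 0], rule exI[of _ 0], rule exI[of _ 0])
       (simp add: Can_def nn_integral_const P.emeasure_space_1[simplified])
next
  case (insert i I)
  interpret PS: product_sigma_finite "\<lambda>_::'i. gauss" by (rule gauss_psf)
  from insert.IH obtain \<alpha> \<beta> \<gamma> where ab: "\<alpha> \<ge> 0" "\<gamma> \<ge> 0" "\<alpha>\<^sup>2 = (\<Sum>i\<in>I. (x i)\<^sup>2)"
    "\<alpha> * \<beta> = (\<Sum>i\<in>I. x i * y i)" "\<beta>\<^sup>2 + \<gamma>\<^sup>2 = (\<Sum>i\<in>I. (y i)\<^sup>2)"
    and IH: "\<And>F. F \<in> borel_measurable borel \<Longrightarrow>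
          (\<integral>\<^sup>+W. F (\<Sum>i\<in>I. x i * W i, \<Sum>i\<in>I. y i * W i) \<partial>PiM I (\<lambda>_. gauss)) = Can F \<alpha> \<beta> \<gamma>"
    by blast
  define \<alpha>' where "\<alpha>' = sqrt ((x i)\<^sup>2 + \<alpha>\<^sup>2)"
  define \<beta>' where "\<beta>' = (x i * y i + \<alpha> * \<beta>) / \<alpha>'"
  define \<gamma>'' where "\<gamma>'' = sqrt (\<gamma>\<^sup>2 + ((y i)\<^sup>2 + \<beta>\<^sup>2 - \<beta>'\<^sup>2))"
  have csb: "\<beta>'\<^sup>2 \<le> (y i)\<^sup>2 + \<beta>\<^sup>2" unfolding \<beta>'_def \<alpha>'_def by (rule cs_aux)
  have main: "(\<integral>\<^sup>+W. F (\<Sum>j\<in>insert i I. x j * W j, \<Sum>j\<in>insert i I. y j * W j) \<partial>PiM (insert i I) (\<lambda>_. gauss))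
      = Can F \<alpha>' \<beta>' \<gamma>''" if Fm: "F \<in> borel_measurable borel" for F
  proof -
    note Fm2[measurable] = borel_pair_meas[OF Fm]
    have m1[measurable]: "(\<lambda>W. \<Sum>j\<in>insert i I. x j * W j) \<in> borel_measurable (PiM (insert i I) (\<lambda>_. gauss))"
      by (rule sum_meas) simp
    have m2[measurable]: "(\<lambda>W. \<Sum>j\<in>insert i I. y j * W j) \<in> borel_measurable (PiM (insert i I) (\<lambda>_. gauss))"
      by (rule sum_meas) simp
    have "(\<integral>\<^sup>+W. F (\<Sum>j\<in>insert i I. x j * W j, \<Sum>j\<in>insert i I. y j * W j) \<partial>PiM (insert i I) (\<lambda>_. gauss))
      = (\<integral>\<^sup>+t. \<integral>\<^sup>+W. F (\<Sum>j\<in>insert i I. x j * (W(i := t)) j, \<Sum>j\<in>insert i I. y j * (W(i := t)) j) \<partial>PiM I (\<lambda>_. gauss) \<partial>gauss)"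
      by (rule PS.product_nn_integral_insert_rev) (use insert.hyps in auto)
    also have "\<dots> = (\<integral>\<^sup>+t. \<integral>\<^sup>+W. F (x i * t + (\<Sum>j\<in>I. x j * W j), y i * t + (\<Sum>j\<in>I. y j * W j)) \<partial>PiM I (\<lambda>_. gauss) \<partial>gauss)"
    proof -
      have "(\<Sum>j\<in>insert i I. z j * (W(i := t)) j) = z i * t + (\<Sum>j\<in>I. z j * W j)" for z :: "'i \<Rightarrow> real" and W t
      proof -
        have "(\<Sum>j\<in>I. z j * (W(i := t)) j) = (\<Sum>j\<in>I. z j * W j)"
          by (rule sum.cong) (use insert.hyps in auto)
        then show ?thesis using insert.hyps by simp
      qed
      then show ?thesis by simp
    qed
    also have "\<dots> = (\<integral>\<^sup>+t. Can (\<lambda>z. F (x i * t + fst z, y i * t + snd z)) \<alpha> \<beta> \<gamma> \<partial>gauss)"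
    proof (rule nn_integral_cong)
      fix t
      have "(\<lambda>z. F (x i * t + fst z, y i * t + snd z)) \<in> borel_measurable borel"
        using meas_aff[OF Fm, of 1 0 "x i * t" 0 1 "y i * t"] by (simp add: add.commute)
      from IH[OF this] show "(\<integral>\<^sup>+W. F (x i * t + (\<Sum>j\<in>I. x j * W j), y i * t + (\<Sum>j\<in>I. y j * W j)) \<partial>PiM I (\<lambda>_. gauss))
          = Can (\<lambda>z. F (x i * t + fst z, y i * t + snd z)) \<alpha> \<beta> \<gamma>" by simp
    qed
    also have "\<dots> = (\<integral>\<^sup>+t. \<integral>\<^sup>+a. \<integral>\<^sup>+b. F (x i * t + \<alpha> * a, y i * t + \<beta> * a + \<gamma> * b) \<partial>gauss \<partial>gauss \<partial>gauss)"
      unfolding Can_def by (simp add: add.assoc)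
    also have "\<dots> = Can F \<alpha>' \<beta>' \<gamma>''"
      unfolding Can_def \<alpha>'_def \<beta>'_def \<gamma>''_def by (rule K3[OF Fm])
    finally show ?thesis .
  qed
  show ?case
  proof (intro exI conjI allI impI)
    show "\<alpha>' \<ge> 0" unfolding \<alpha>'_def by simp
    have nn0: "0 \<le> \<gamma>\<^sup>2 + ((y i)\<^sup>2 + \<beta>\<^sup>2 - \<beta>'\<^sup>2)" using csb zero_le_power2[of \<gamma>] by linarith
    show "\<gamma>'' \<ge> 0" unfolding \<gamma>''_def using nn0 by simp
    show "\<alpha>'\<^sup>2 = (\<Sum>i\<in>insert i I. (x i)\<^sup>2)" unfolding \<alpha>'_def using insert.hyps ab by (simp add: sum_nonneg add_nonneg_nonneg)
    show "\<alpha>' * \<beta>' = (\<Sum>i\<in>insert i I. x i * y i)"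
    proof (cases "\<alpha>' = 0")
      case True
      then have "x i = 0" "\<alpha> = 0" unfolding \<alpha>'_def by (auto simp: add_nonneg_eq_0_iff)
      then show ?thesis using True insert.hyps ab by simp
    next
      case False then show ?thesis unfolding \<beta>'_def using insert.hyps ab by simp
    qed
    show "\<beta>'\<^sup>2 + \<gamma>''\<^sup>2 = (\<Sum>i\<in>insert i I. (y i)\<^sup>2)"
    proof -
      have nn: "0 \<le> \<gamma>\<^sup>2 + ((y i)\<^sup>2 + \<beta>\<^sup>2 - \<beta>'\<^sup>2)" using csb zero_le_power2[of \<gamma>] by linarith
      show ?thesis unfolding \<gamma>''_def using nn insert.hyps ab by (simp add: algebra_simps)
    qed
    fix F :: "real \<times> real \<Rightarrow> ennreal"
    assume "F \<in> borel_measurable borel"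
    then show "(\<integral>\<^sup>+W. F (\<Sum>i\<in>insert i I. x i * W i, \<Sum>i\<in>insert i I. y i * W i) \<partial>PiM (insert i I) (\<lambda>_. gauss)) = Can F \<alpha>' \<beta>' \<gamma>''"
      by (rule main)
  qed
qed


lemma G2_sets: "sets G2 = sets (borel :: (real\<times>real) measure)"
proof -
  have "sets G2 = sets (borel \<Otimes>\<^sub>M borel :: (real\<times>real) measure)"
    by (rule sets_pair_measure_cong) simp_all
  also have "\<dots> = sets (borel :: (real\<times>real) measure)" by (simp only: borel_prod)
  finally show ?thesis .
qed

lemma G2_measN: "K \<in> measurable borel N \<Longrightarrow> K \<in> measurable G2 N"
  using measurable_cong_sets[OF G2_sets refl] by blast

lemma gvec_int:
  fixes I :: "'i set" and x y :: "'i \<Rightarrow> real"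
  assumes fin: "finite I"
  shows "\<exists>\<alpha> \<beta> \<gamma>. \<alpha> \<ge> 0 \<and> \<gamma> \<ge> 0 \<and> \<alpha>\<^sup>2 = (\<Sum>i\<in>I. (x i)\<^sup>2) \<and> \<alpha> * \<beta> = (\<Sum>i\<in>I. x i * y i)
     \<and> \<beta>\<^sup>2 + \<gamma>\<^sup>2 = (\<Sum>i\<in>I. (y i)\<^sup>2)
     \<and> (\<forall>f::real\<times>real\<Rightarrow>real. f \<in> borel_measurable borel \<longrightarrow>
          (integrable (PiM I (\<lambda>_. gauss)) (\<lambda>W. f (\<Sum>i\<in>I. x i * W i, \<Sum>i\<in>I. y i * W i))
             \<longleftrightarrow> integrable G2 (\<lambda>z. f (\<alpha> * fst z, \<beta> * fst z + \<gamma> * snd z)))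
        \<and> (\<integral>W. f (\<Sum>i\<in>I. x i * W i, \<Sum>i\<in>I. y i * W i) \<partial>PiM I (\<lambda>_. gauss))
             = (\<integral>z. f (\<alpha> * fst z, \<beta> * fst z + \<gamma> * snd z) \<partial>G2))"
proof -
  obtain \<alpha> \<beta> \<gamma> where ab: "\<alpha> \<ge> 0" "\<gamma> \<ge> 0" "\<alpha>\<^sup>2 = (\<Sum>i\<in>I. (x i)\<^sup>2)" "\<alpha> * \<beta> = (\<Sum>i\<in>I. x i * y i)"
     "\<beta>\<^sup>2 + \<gamma>\<^sup>2 = (\<Sum>i\<in>I. (y i)\<^sup>2)"
    and H: "\<And>F. F \<in> borel_measurable borel \<Longrightarrow>
          (\<integral>\<^sup>+W. F (\<Sum>i\<in>I. x i * W i, \<Sum>i\<in>I. y i * W i) \<partial>PiM I (\<lambda>_. gauss)) = Can F \<alpha> \<beta> \<gamma>"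
    using gvec[OF fin, of x y] by blast
  define S where "S = (\<lambda>W. (\<Sum>i\<in>I. x i * W i, \<Sum>i\<in>I. y i * W i))"
  define T where "T = (\<lambda>z::real\<times>real. (\<alpha> * fst z, \<beta> * fst z + \<gamma> * snd z))"
  have Sm: "S \<in> measurable (PiM I (\<lambda>_. gauss)) borel"
  proof -
    have "S \<in> measurable (PiM I (\<lambda>_. gauss)) (borel \<Otimes>\<^sub>M borel)"
      unfolding S_def by (intro measurable_Pair sum_meas) simp_all
    then show ?thesis by (simp only: borel_prod)
  qed
  have Tb: "T \<in> measurable borel borel"
    unfolding T_def by (intro borel_measurable_continuous_onI continuous_intros)
  have Tm: "T \<in> measurable G2 borel" by (rule G2_measN[OF Tb])
  have D: "distr (PiM I (\<lambda>_. gauss)) borel S = distr G2 borel T"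
  proof (rule measure_eqI)
    show "sets (distr (PiM I (\<lambda>_. gauss)) borel S) = sets (distr G2 borel T)" by simp
  next
    fix A assume "A \<in> sets (distr (PiM I (\<lambda>_. gauss)) borel S)"
    then have A: "A \<in> sets borel" by simp
    have im: "indicator A \<in> borel_measurable (borel :: (real\<times>real) measure)" using A by simp
    have "emeasure (distr (PiM I (\<lambda>_. gauss)) borel S) A = (\<integral>\<^sup>+z. indicator A z \<partial>distr (PiM I (\<lambda>_. gauss)) borel S)"
      using A by (simp add: nn_integral_indicator)
    also have "\<dots> = (\<integral>\<^sup>+W. indicator A (S W) \<partial>PiM I (\<lambda>_. gauss))"
      by (rule nn_integral_distr[OF Sm]) (use im in simp)
    also have "\<dots> = Can (indicator A) \<alpha> \<beta> \<gamma>" unfolding S_def by (rule H[OF im])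
    also have "\<dots> = (\<integral>\<^sup>+z. indicator A (T z) \<partial>G2)"
      unfolding Can_def T_def using G2_iter[OF measurable_compose[OF Tb im]] by (simp add: T_def comp_def)
    also have "\<dots> = (\<integral>\<^sup>+z. indicator A z \<partial>distr G2 borel T)"
      by (rule nn_integral_distr[OF Tm, symmetric]) (use im in simp)
    also have "\<dots> = emeasure (distr G2 borel T) A"
      using A by (simp add: nn_integral_indicator)
    finally show "emeasure (distr (PiM I (\<lambda>_. gauss)) borel S) A = emeasure (distr G2 borel T) A" .
  qed
  show ?thesis
  proof (intro exI conjI allI impI; (rule ab)?)
    fix f :: "real\<times>real\<Rightarrow>real" assume fm: "f \<in> borel_measurable borel"
    have "integrable (PiM I (\<lambda>_. gauss)) (\<lambda>W. f (S W)) = integrable (distr (PiM I (\<lambda>_. gauss)) borel S) f"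
      by (rule integrable_distr_eq[OF Sm fm, symmetric])
    also have "\<dots> = integrable (distr G2 borel T) f" by (simp only: D)
    also have "\<dots> = integrable G2 (\<lambda>z. f (T z))" by (rule integrable_distr_eq[OF Tm fm])
    finally show "integrable (PiM I (\<lambda>_. gauss)) (\<lambda>W. f (\<Sum>i\<in>I. x i * W i, \<Sum>i\<in>I. y i * W i))
             \<longleftrightarrow> integrable G2 (\<lambda>z. f (\<alpha> * fst z, \<beta> * fst z + \<gamma> * snd z))" unfolding S_def T_def .
    have "(\<integral>W. f (S W) \<partial>PiM I (\<lambda>_. gauss)) = integral\<^sup>L (distr (PiM I (\<lambda>_. gauss)) borel S) f"
      by (rule integral_distr[OF Sm fm, symmetric])
    also have "\<dots> = integral\<^sup>L (distr G2 borel T) f" by (simp only: D)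
    also have "\<dots> = (\<integral>z. f (T z) \<partial>G2)" by (rule integral_distr[OF Tm fm])
    finally show "(\<integral>W. f (\<Sum>i\<in>I. x i * W i, \<Sum>i\<in>I. y i * W i) \<partial>PiM I (\<lambda>_. gauss))
             = (\<integral>z. f (\<alpha> * fst z, \<beta> * fst z + \<gamma> * snd z) \<partial>G2)" unfolding S_def T_def .
  qed
qed

lemma pair_prod:
  fixes f g :: "'a \<Rightarrow> real"
  assumes s1: "sigma_finite_measure M1" and s2: "sigma_finite_measure M2"
    and fi: "integrable M1 f" and gi: "integrable M2 g"
  shows "integrable (M1 \<Otimes>\<^sub>M M2) (\<lambda>z. f (fst z) * g (snd z))"
    and "(\<integral>z. f (fst z) * g (snd z) \<partial>(M1 \<Otimes>\<^sub>M M2)) = integral\<^sup>L M1 f * integral\<^sup>L M2 g"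
proof -
  interpret P: pair_sigma_finite M1 M2 by (simp add: pair_sigma_finite_def s1 s2)
  have fm[measurable]: "f \<in> borel_measurable M1" using fi by simp
  have gm[measurable]: "g \<in> borel_measurable M2" using gi by simp
  have ff: "(\<integral>\<^sup>+x. ennreal (norm (f x)) \<partial>M1) < \<infinity>" using fi by (simp add: integrable_iff_bounded)
  have gf: "(\<integral>\<^sup>+x. ennreal (norm (g x)) \<partial>M2) < \<infinity>" using gi by (simp add: integrable_iff_bounded)
  have "(\<integral>\<^sup>+z. ennreal (norm (f (fst z) * g (snd z))) \<partial>(M1 \<Otimes>\<^sub>M M2))
      = (\<integral>\<^sup>+x. \<integral>\<^sup>+y. ennreal (norm (f x)) * ennreal (norm (g y)) \<partial>M2 \<partial>M1)"
    by (subst P.M2.nn_integral_fst[symmetric]) (simp_all add: abs_mult ennreal_mult)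
  also have "\<dots> = (\<integral>\<^sup>+x. ennreal (norm (f x)) * (\<integral>\<^sup>+y. ennreal (norm (g y)) \<partial>M2) \<partial>M1)"
    by (simp add: nn_integral_cmult)
  also have "\<dots> = (\<integral>\<^sup>+x. ennreal (norm (f x)) \<partial>M1) * (\<integral>\<^sup>+y. ennreal (norm (g y)) \<partial>M2)"
    by (simp add: nn_integral_multc)
  also have "\<dots> < \<infinity>" using ff gf by (simp add: ennreal_mult_less_top)
  finally have bnd: "(\<integral>\<^sup>+z. ennreal (norm (f (fst z) * g (snd z))) \<partial>(M1 \<Otimes>\<^sub>M M2)) < \<infinity>" .
  show I: "integrable (M1 \<Otimes>\<^sub>M M2) (\<lambda>z. f (fst z) * g (snd z))"
    by (rule integrableI_bounded) (use bnd in auto)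
  have I': "integrable (M1 \<Otimes>\<^sub>M M2) (case_prod (\<lambda>x y. f x * g y))"
    using I by (simp add: case_prod_unfold)
  have "(\<integral>z. f (fst z) * g (snd z) \<partial>(M1 \<Otimes>\<^sub>M M2)) = (\<integral>x. (\<integral>y. f x * g y \<partial>M2) \<partial>M1)"
    using P.integral_fst[OF I'] by (simp add: case_prod_unfold)
  also have "\<dots> = (\<integral>x. f x * integral\<^sup>L M2 g \<partial>M1)" by simp
  also have "\<dots> = integral\<^sup>L M1 f * integral\<^sup>L M2 g" by simp
  finally show "(\<integral>z. f (fst z) * g (snd z) \<partial>(M1 \<Otimes>\<^sub>M M2)) = integral\<^sup>L M1 f * integral\<^sup>L M2 g" .
qed

lemma gauss_eq: "gauss = std_normal_distribution"
  unfolding gauss_def ..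

lemma gauss_int_pow: "integrable gauss (\<lambda>x. x ^ k)"
  unfolding gauss_eq by (rule integrable_std_normal_distribution_moment)

lemma gauss_int_id: "integrable gauss (\<lambda>x. x)"
  using gauss_int_pow[of 1] by simp

lemma gauss_int_sq: "integrable gauss (\<lambda>x. x\<^sup>2)"
  using gauss_int_pow[of 2] by simp

lemma gauss_mean: "(\<integral>x. x \<partial>gauss) = 0"
  using integral_std_normal_distribution_moment_odd[of 1] unfolding gauss_eq by simp

lemma gauss_sq: "(\<integral>x. x\<^sup>2 \<partial>gauss) = 1"
  using std_normal_distribution_even_moments(1)[of 1] unfolding gauss_eq by simp


lemma gauss_measure_UNIV[simp]: "measure gauss UNIV = 1"
  using gs.prob_space by simp

lemma gauss_int_const: "integrable gauss (\<lambda>x. c::real)"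
  by (simp add: gs.integrable_const)

lemma gauss_int_abs: "integrable gauss (\<lambda>x. \<bar>x\<bar>)"
  using integrable_abs[OF gauss_int_id] by simp

lemma sf_gauss: "sigma_finite_measure gauss" by (rule gs.sigma_finite_measure)

lemmas G2prod = pair_prod[OF sf_gauss sf_gauss]

lemma G2_fst_sq: "integrable G2 (\<lambda>z. (fst z)\<^sup>2)" "(\<integral>z. (fst z)\<^sup>2 \<partial>G2) = 1"
  using G2prod[OF gauss_int_sq gauss_int_const[of 1]] gauss_sq by simp_all

lemma G2_snd_sq: "integrable G2 (\<lambda>z. (snd z)\<^sup>2)" "(\<integral>z. (snd z)\<^sup>2 \<partial>G2) = 1"
  using G2prod[OF gauss_int_const[of 1] gauss_int_sq] gauss_sq by simp_all

lemma G2_fst_snd: "integrable G2 (\<lambda>z. fst z * snd z)" "(\<integral>z. fst z * snd z \<partial>G2) = 0"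
  using G2prod[OF gauss_int_id gauss_int_id] gauss_mean by simp_all

lemma G2_abs_abs: "integrable G2 (\<lambda>z. \<bar>fst z\<bar> * \<bar>snd z\<bar>)"
  using G2prod[OF gauss_int_abs gauss_int_abs] by simp_all

lemma sigma_hom: "t \<ge> 0 \<Longrightarrow> sigma_s sp sm (t * x) = t * sigma_s sp sm x"
proof (cases "x \<ge> 0")
  case True
  assume t: "t \<ge> 0"
  then have "t * x \<ge> 0" using True by simp
  then show ?thesis unfolding sigma_s_def using True by (simp add: max_def min_def)
next
  case False
  assume t: "t \<ge> 0"
  then have "t * x \<le> 0" using False by (simp add: mult_nonneg_nonpos)
  then show ?thesis unfolding sigma_s_def using False by (auto simp add: max_def min_def)
qed

lemma sigma_bound: "\<bar>sigma_s sp sm x\<bar> \<le> (\<bar>sp\<bar> + \<bar>sm\<bar>) * \<bar>x\<bar>"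
proof (cases "x \<ge> 0")
  case True
  then have "sigma_s sp sm x = sp * x" unfolding sigma_s_def by simp
  then show ?thesis by (simp add: abs_mult distrib_right)
next
  case False
  then have "sigma_s sp sm x = sm * x" unfolding sigma_s_def by simp
  then show ?thesis by (simp add: abs_mult distrib_right)
qed

lemma sigma_cont: "continuous_on UNIV (sigma_s sp sm)"
  unfolding sigma_s_def by (intro continuous_intros)

lemma sigma_meas[measurable]: "sigma_s sp sm \<in> borel_measurable borel"
  by (rule borel_measurable_continuous_onI[OF sigma_cont])

lemma sig_int_G2: "integrable G2 (\<lambda>z. sigma_s sp sm (\<alpha> * fst z) * sigma_s sp sm (\<beta> * fst z + \<gamma> * snd z))"
proof -
  define L where "L = \<bar>sp\<bar> + \<bar>sm\<bar>"
  have L0: "L \<ge> 0" unfolding L_def by simp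
  define D where "D = (\<lambda>z::real\<times>real. L * L * \<bar>\<alpha>\<bar> * (\<bar>\<beta>\<bar> * (fst z)\<^sup>2 + \<bar>\<gamma>\<bar> * (\<bar>fst z\<bar> * \<bar>snd z\<bar>)))"
  have Di0: "integrable G2 (\<lambda>z. \<bar>\<beta>\<bar> * (fst z)\<^sup>2 + \<bar>\<gamma>\<bar> * (\<bar>fst z\<bar> * \<bar>snd z\<bar>))"
    by (intro Bochner_Integration.integrable_add Bochner_Integration.integrable_mult_right G2_fst_sq(1) G2_abs_abs)
  have Di: "integrable G2 D" unfolding D_def
    by (rule Bochner_Integration.integrable_mult_right[OF Di0])
  show ?thesis
  proof (rule Bochner_Integration.integrable_bound[OF Di])
    have "(\<lambda>z::real\<times>real. sigma_s sp sm (\<alpha> * fst z) * sigma_s sp sm (\<beta> * fst z + \<gamma> * snd z)) \<in> borel_measurable borel"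
      by (intro borel_measurable_continuous_onI continuous_intros continuous_on_compose2[OF sigma_cont]) auto
    then show "(\<lambda>z. sigma_s sp sm (\<alpha> * fst z) * sigma_s sp sm (\<beta> * fst z + \<gamma> * snd z)) \<in> borel_measurable G2"
      by (rule G2_measN)
    show "AE z in G2. norm (sigma_s sp sm (\<alpha> * fst z) * sigma_s sp sm (\<beta> * fst z + \<gamma> * snd z)) \<le> norm (D z)"
    proof (rule AE_I2)
      fix z :: "real \<times> real"
      have 1: "\<bar>sigma_s sp sm (\<alpha> * fst z)\<bar> \<le> L * (\<bar>\<alpha>\<bar> * \<bar>fst z\<bar>)"
        using sigma_bound[of sp sm "\<alpha> * fst z"] unfolding L_def by (simp add: abs_mult)
      have 2: "\<bar>sigma_s sp sm (\<beta> * fst z + \<gamma> * snd z)\<bar> \<le> L * (\<bar>\<beta>\<bar> * \<bar>fst z\<bar> + \<bar>\<gamma>\<bar> * \<bar>snd z\<bar>)"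
      proof -
        have "\<bar>\<beta> * fst z + \<gamma> * snd z\<bar> \<le> \<bar>\<beta>\<bar> * \<bar>fst z\<bar> + \<bar>\<gamma>\<bar> * \<bar>snd z\<bar>"
          by (metis abs_mult abs_triangle_ineq)
        from mult_left_mono[OF this L0] sigma_bound[of sp sm "\<beta> * fst z + \<gamma> * snd z"]
        show ?thesis unfolding L_def by linarith
      qed
      have "\<bar>sigma_s sp sm (\<alpha> * fst z) * sigma_s sp sm (\<beta> * fst z + \<gamma> * snd z)\<bar>
          \<le> (L * (\<bar>\<alpha>\<bar> * \<bar>fst z\<bar>)) * (L * (\<bar>\<beta>\<bar> * \<bar>fst z\<bar> + \<bar>\<gamma>\<bar> * \<bar>snd z\<bar>))"
        unfolding abs_mult by (rule mult_mono[OF 1 2]) (use L0 in auto)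
      also have "\<dots> = D z" unfolding D_def by (simp add: power2_eq_square algebra_simps abs_mult)
      also have "\<dots> \<le> norm (D z)" by simp
      finally show "norm (sigma_s sp sm (\<alpha> * fst z) * sigma_s sp sm (\<beta> * fst z + \<gamma> * snd z)) \<le> norm (D z)" by simp
    qed
  qed
qed


lemma sum_ind:
  fixes W :: "'i \<Rightarrow> real"
  assumes "finite I" "p \<in> I"
  shows "(\<Sum>r\<in>I. (if r = p then 1 else 0) * W r) = W p"
proof -
  have "(\<Sum>r\<in>I. (if r = p then 1 else 0) * W r) = (\<Sum>r\<in>I. (if r = p then W r else 0))"
    by (rule sum.cong) auto
  also have "\<dots> = W p" using assms by (simp add: sum.delta')
  finally show ?thesis .
qed

lemma post_moment:
  fixes I :: "'i set"
  assumes fin: "finite I" and p: "p \<in> I" and q: "q \<in> I"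
  shows "integrable (PiM I (\<lambda>_. gauss)) (\<lambda>W. W p * W q)"
    and "(\<integral>W. W p * W q \<partial>PiM I (\<lambda>_. gauss)) = (if p = q then 1 else 0)"
proof -
  define x where "x = (\<lambda>r. if r = p then (1::real) else 0)"
  define y where "y = (\<lambda>r. if r = q then (1::real) else 0)"
  obtain \<alpha> \<beta> \<gamma> where ab: "\<alpha> \<ge> 0" "\<gamma> \<ge> 0" "\<alpha>\<^sup>2 = (\<Sum>i\<in>I. (x i)\<^sup>2)" "\<alpha> * \<beta> = (\<Sum>i\<in>I. x i * y i)"
     "\<beta>\<^sup>2 + \<gamma>\<^sup>2 = (\<Sum>i\<in>I. (y i)\<^sup>2)"
    and H: "\<And>f::real\<times>real\<Rightarrow>real. f \<in> borel_measurable borel \<Longrightarrow>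
          (integrable (PiM I (\<lambda>_. gauss)) (\<lambda>W. f (\<Sum>i\<in>I. x i * W i, \<Sum>i\<in>I. y i * W i))
             \<longleftrightarrow> integrable G2 (\<lambda>z. f (\<alpha> * fst z, \<beta> * fst z + \<gamma> * snd z)))
        \<and> (\<integral>W. f (\<Sum>i\<in>I. x i * W i, \<Sum>i\<in>I. y i * W i) \<partial>PiM I (\<lambda>_. gauss))
             = (\<integral>z. f (\<alpha> * fst z, \<beta> * fst z + \<gamma> * snd z) \<partial>G2)"
    using gvec_int[OF fin, of x y] by blast
  have sx: "(\<Sum>i\<in>I. x i * W i) = W p" for W :: "'i \<Rightarrow> real" unfolding x_def by (rule sum_ind[OF fin p])
  have sy: "(\<Sum>i\<in>I. y i * W i) = W q" for W :: "'i \<Rightarrow> real" unfolding y_def by (rule sum_ind[OF fin q])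
  have A: "(\<Sum>i\<in>I. (x i)\<^sup>2) = 1" using sx[of x] unfolding x_def by (simp add: power2_eq_square)
  have B: "(\<Sum>i\<in>I. x i * y i) = (if p = q then 1 else 0)" using sx[of y] unfolding y_def by simp
  have a1: "\<alpha> = 1" using ab(1,3) A by (simp add: power2_eq_1_iff)
  have b: "\<beta> = (if p = q then 1 else 0)" using ab(4) B a1 by simp
  have fm: "(\<lambda>z::real\<times>real. fst z * snd z) \<in> borel_measurable borel"
    by (intro borel_measurable_continuous_onI continuous_intros)
  note Hf = H[OF fm]
  have gi: "integrable G2 (\<lambda>z. \<alpha> * fst z * (\<beta> * fst z + \<gamma> * snd z))"
  proof -
    have "integrable G2 (\<lambda>z. \<beta> * (fst z)\<^sup>2 + \<gamma> * (fst z * snd z))"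
      by (intro Bochner_Integration.integrable_add Bochner_Integration.integrable_mult_right G2_fst_sq(1) G2_fst_snd(1))
    then show ?thesis using a1 by (simp add: power2_eq_square algebra_simps)
  qed
  have gv: "(\<integral>z. \<alpha> * fst z * (\<beta> * fst z + \<gamma> * snd z) \<partial>G2) = \<beta>"
  proof -
    have "(\<integral>z. \<alpha> * fst z * (\<beta> * fst z + \<gamma> * snd z) \<partial>G2) = (\<integral>z. \<beta> * (fst z)\<^sup>2 + \<gamma> * (fst z * snd z) \<partial>G2)"
      using a1 by (simp add: power2_eq_square algebra_simps)
    also have "\<dots> = \<beta> * (\<integral>z. (fst z)\<^sup>2 \<partial>G2) + \<gamma> * (\<integral>z. fst z * snd z \<partial>G2)"
      by (simp add: Bochner_Integration.integral_add G2_fst_sq(1) G2_fst_snd(1))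
    also have "\<dots> = \<beta>" using G2_fst_sq(2) G2_fst_snd(2) by simp
    finally show ?thesis .
  qed
  show "integrable (PiM I (\<lambda>_. gauss)) (\<lambda>W. W p * W q)" using Hf gi by (simp add: sx sy)
  show "(\<integral>W. W p * W q \<partial>PiM I (\<lambda>_. gauss)) = (if p = q then 1 else 0)" using Hf gv b by (simp add: sx sy)
qed


lemma sigma_zero[simp]: "sigma_s sp sm 0 = 0"
  unfolding sigma_s_def by simp

lemma gsig:
  fixes I :: "'i set" and x y :: "'i \<Rightarrow> real"
  assumes fin: "finite I"
  shows "integrable (PiM I (\<lambda>_. gauss)) (\<lambda>W. sigma_s sp sm (\<Sum>i\<in>I. x i * W i) * sigma_s sp sm (\<Sum>i\<in>I. y i * W i))"
    and "(\<integral>W. sigma_s sp sm (\<Sum>i\<in>I. x i * W i) * sigma_s sp sm (\<Sum>i\<in>I. y i * W i) \<partial>PiM I (\<lambda>_. gauss))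
        = sqrt (\<Sum>i\<in>I. (x i)\<^sup>2) * sqrt (\<Sum>i\<in>I. (y i)\<^sup>2)
          * K1 sp sm ((\<Sum>i\<in>I. x i * y i) / sqrt ((\<Sum>i\<in>I. (x i)\<^sup>2) * (\<Sum>i\<in>I. (y i)\<^sup>2)))"
proof -
  obtain \<alpha> \<beta> \<gamma> where ab: "\<alpha> \<ge> 0" "\<gamma> \<ge> 0" "\<alpha>\<^sup>2 = (\<Sum>i\<in>I. (x i)\<^sup>2)" "\<alpha> * \<beta> = (\<Sum>i\<in>I. x i * y i)"
     "\<beta>\<^sup>2 + \<gamma>\<^sup>2 = (\<Sum>i\<in>I. (y i)\<^sup>2)"
    and H: "\<And>f::real\<times>real\<Rightarrow>real. f \<in> borel_measurable borel \<Longrightarrow>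
          (integrable (PiM I (\<lambda>_. gauss)) (\<lambda>W. f (\<Sum>i\<in>I. x i * W i, \<Sum>i\<in>I. y i * W i))
             \<longleftrightarrow> integrable G2 (\<lambda>z. f (\<alpha> * fst z, \<beta> * fst z + \<gamma> * snd z)))
        \<and> (\<integral>W. f (\<Sum>i\<in>I. x i * W i, \<Sum>i\<in>I. y i * W i) \<partial>PiM I (\<lambda>_. gauss))
             = (\<integral>z. f (\<alpha> * fst z, \<beta> * fst z + \<gamma> * snd z) \<partial>G2)"
    using gvec_int[OF fin, of x y] by blast
  define A where "A = (\<Sum>i\<in>I. (x i)\<^sup>2)"
  define B where "B = (\<Sum>i\<in>I. x i * y i)"
  define C where "C = (\<Sum>i\<in>I. (y i)\<^sup>2)"
  have fm: "(\<lambda>z::real\<times>real. sigma_s sp sm (fst z) * sigma_s sp sm (snd z)) \<in> borel_measurable borel"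
    by (intro borel_measurable_continuous_onI continuous_intros continuous_on_compose2[OF sigma_cont]) auto
  note Hf = H[OF fm]
  show "integrable (PiM I (\<lambda>_. gauss)) (\<lambda>W. sigma_s sp sm (\<Sum>i\<in>I. x i * W i) * sigma_s sp sm (\<Sum>i\<in>I. y i * W i))"
    using Hf sig_int_G2 by simp
  have val: "(\<integral>z. sigma_s sp sm (\<alpha> * fst z) * sigma_s sp sm (\<beta> * fst z + \<gamma> * snd z) \<partial>G2)
      = sqrt A * sqrt C * K1 sp sm (B / sqrt (A * C))"
  proof (cases "\<alpha> = 0")
    case True
    then have "A = 0" using ab(3) unfolding A_def by simp
    then show ?thesis using True by simp
  next
    case False
    then have apos: "\<alpha> > 0" using ab(1) by simp
    have sA: "sqrt A = \<alpha>" unfolding A_def using ab(1) ab(3)[symmetric] by simp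
    show ?thesis
    proof (cases "C = 0")
      case True
      then have "\<beta>\<^sup>2 + \<gamma>\<^sup>2 = 0" using ab(5) unfolding C_def by simp
      then have "\<beta> = 0" "\<gamma> = 0" by (auto simp: add_nonneg_eq_0_iff)
      then show ?thesis using True by simp
    next
      case False
      have C0: "C \<ge> 0" unfolding C_def by (simp add: sum_nonneg)
      then have Cpos: "C > 0" using False by simp
      define r where "r = sqrt C"
      have rpos: "r > 0" unfolding r_def using Cpos by simp
      have rr: "r\<^sup>2 = \<beta>\<^sup>2 + \<gamma>\<^sup>2" unfolding r_def using C0 ab(5) unfolding C_def by simp
      define \<rho> where "\<rho> = B / sqrt (A * C)"
      have rho: "\<rho> = \<beta> / r"
      proof -
        have "sqrt (A * C) = \<alpha> * r" unfolding r_def using sA by (simp add: real_sqrt_mult)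
        then show ?thesis unfolding \<rho>_def B_def using ab(4)[symmetric] apos by simp
      qed
      have srho: "sqrt (1 - \<rho>\<^sup>2) = \<gamma> / r"
      proof -
        have "1 - \<rho>\<^sup>2 = (r\<^sup>2 - \<beta>\<^sup>2) / r\<^sup>2" unfolding rho using rpos by (simp add: power_divide diff_divide_distrib)
        also have "r\<^sup>2 - \<beta>\<^sup>2 = \<gamma>\<^sup>2" using rr by simp
        finally have "1 - \<rho>\<^sup>2 = (\<gamma> / r)\<^sup>2" by (simp add: power_divide)
        then show ?thesis using ab(2) rpos by simp
      qed
      have pt: "sigma_s sp sm (\<alpha> * fst z) * sigma_s sp sm (\<beta> * fst z + \<gamma> * snd z)
          = (\<alpha> * r) * (sigma_s sp sm (fst z) * sigma_s sp sm (\<rho> * fst z + sqrt (1 - \<rho>\<^sup>2) * snd z))" for z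
      proof -
        have "\<beta> * fst z + \<gamma> * snd z = r * (\<rho> * fst z + sqrt (1 - \<rho>\<^sup>2) * snd z)"
          using rpos by (subst srho) (simp add: rho field_simps)
        then have "sigma_s sp sm (\<beta> * fst z + \<gamma> * snd z) = r * sigma_s sp sm (\<rho> * fst z + sqrt (1 - \<rho>\<^sup>2) * snd z)"
          using sigma_hom[of r] rpos by simp
        moreover have "sigma_s sp sm (\<alpha> * fst z) = \<alpha> * sigma_s sp sm (fst z)" using sigma_hom[of \<alpha>] ab(1) by simp
        ultimately show ?thesis by simp
      qed
      have "(\<integral>z. sigma_s sp sm (\<alpha> * fst z) * sigma_s sp sm (\<beta> * fst z + \<gamma> * snd z) \<partial>G2)
          = (\<alpha> * r) * K1 sp sm \<rho>" unfolding K1_def by (simp only: pt) simp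
      then show ?thesis unfolding sA[symmetric] r_def \<rho>_def .
    qed
  qed
  show "(\<integral>W. sigma_s sp sm (\<Sum>i\<in>I. x i * W i) * sigma_s sp sm (\<Sum>i\<in>I. y i * W i) \<partial>PiM I (\<lambda>_. gauss))
        = sqrt (\<Sum>i\<in>I. (x i)\<^sup>2) * sqrt (\<Sum>i\<in>I. (y i)\<^sup>2)
          * K1 sp sm ((\<Sum>i\<in>I. x i * y i) / sqrt ((\<Sum>i\<in>I. (x i)\<^sup>2) * (\<Sum>i\<in>I. (y i)\<^sup>2)))"
    using Hf val unfolding A_def B_def C_def by simp
qed

definition U :: "nat \<Rightarrow> (nat \<Rightarrow> nat \<Rightarrow> real) \<Rightarrow> nat \<Rightarrow> nat \<Rightarrow> (nat \<times> nat \<Rightarrow> real) \<Rightarrow> real" where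
  "U n X p j W = (\<Sum>j'<n. X p j' * W (j', j))"

definition Gm :: "nat \<Rightarrow> (nat \<Rightarrow> nat \<Rightarrow> real) \<Rightarrow> nat \<Rightarrow> nat \<Rightarrow> real" where
  "Gm n X p q = (\<Sum>i<n. X p i * X q i)"

lemma colsum_gen:
  fixes g :: "nat \<Rightarrow> real"
  assumes j: "j < n"
  shows "(\<Sum>r\<in>{..<n} \<times> {..<n}. (if snd r = j then g (fst r) else 0)) = (\<Sum>i<n. g i)"
proof -
  have "(\<Sum>r\<in>{..<n} \<times> {..<n}. (if snd r = j then g (fst r) else 0))
      = (\<Sum>i<n. \<Sum>k<n. (if k = j then g i else 0))"
    using sum.cartesian_product[of "\<lambda>i k. (if k = j then g i else 0)" "{..<n}" "{..<n}"]
    by (simp add: case_prod_unfold)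
  also have "\<dots> = (\<Sum>i<n. g i)" using j by (simp add: sum.delta')
  finally show ?thesis .
qed

lemma colsum_W:
  assumes j: "j < n"
  shows "(\<Sum>r\<in>{..<n} \<times> {..<n}. (if snd r = j then X p (fst r) else 0) * W r) = U n X p j W"
proof -
  have "(\<Sum>r\<in>{..<n} \<times> {..<n}. (if snd r = j then X p (fst r) else 0) * W r)
      = (\<Sum>r\<in>{..<n} \<times> {..<n}. (if snd r = j then X p (fst r) * W (fst r, j) else 0))"
    by (rule sum.cong) (auto simp: prod_eq_iff)
  also have "\<dots> = U n X p j W" unfolding U_def by (rule colsum_gen[OF j])
  finally show ?thesis .
qed

lemma colsum_sq:
  assumes j: "j < n"
  shows "(\<Sum>r\<in>{..<n} \<times> {..<n}. ((if snd r = j then X p (fst r) else 0))\<^sup>2) = Gm n X p p"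
proof -
  have "(\<Sum>r\<in>{..<n} \<times> {..<n}. ((if snd r = j then X p (fst r) else 0))\<^sup>2)
      = (\<Sum>r\<in>{..<n} \<times> {..<n}. (if snd r = j then X p (fst r) * X p (fst r) else 0))"
    by (rule sum.cong) (auto simp: power2_eq_square)
  also have "\<dots> = Gm n X p p" unfolding Gm_def by (rule colsum_gen[OF j])
  finally show ?thesis .
qed

lemma colsum_xy:
  assumes j: "j < n"
  shows "(\<Sum>r\<in>{..<n} \<times> {..<n}. (if snd r = j then X p (fst r) else 0) * (if snd r = j then X q (fst r) else 0)) = Gm n X p q"
proof -
  have "(\<Sum>r\<in>{..<n} \<times> {..<n}. (if snd r = j then X p (fst r) else 0) * (if snd r = j then X q (fst r) else 0))
      = (\<Sum>r\<in>{..<n} \<times> {..<n}. (if snd r = j then X p (fst r) * X q (fst r) else 0))"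
    by (rule sum.cong) auto
  also have "\<dots> = Gm n X p q" unfolding Gm_def by (rule colsum_gen[OF j])
  finally show ?thesis .
qed

lemma colI:
  assumes j: "j < n" and j': "j' < n"
  shows "integrable (Wlaw n) (\<lambda>W. sigma_s sp sm (U n X p j W) * sigma_s sp sm (U n X q j' W))"
  using gsig(1)[of "{..<n} \<times> {..<n}" sp sm "\<lambda>r. if snd r = j then X p (fst r) else 0" "\<lambda>r. if snd r = j' then X q (fst r) else 0"]
  unfolding Wlaw_def colsum_W[OF j] colsum_W[OF j'] by simp

definition Mv :: "nat \<Rightarrow> real \<Rightarrow> real \<Rightarrow> (nat \<Rightarrow> nat \<Rightarrow> real) \<Rightarrow> nat \<Rightarrow> nat \<Rightarrow> real" where
  "Mv n sp sm X p q = sqrt (Gm n X p p) * sqrt (Gm n X q q) * K1 sp sm (Gm n X p q / sqrt (Gm n X p p * Gm n X q q))"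

lemma colE:
  assumes j: "j < n"
  shows "(\<integral>W. sigma_s sp sm (U n X p j W) * sigma_s sp sm (U n X q j W) \<partial>Wlaw n) = Mv n sp sm X p q"
  using gsig(2)[of "{..<n} \<times> {..<n}" sp sm "\<lambda>r. if snd r = j then X p (fst r) else 0" "\<lambda>r. if snd r = j then X q (fst r) else 0"]
  unfolding Wlaw_def colsum_W[OF j] colsum_sq[OF j] colsum_xy[OF j] Mv_def by simp

lemma postI:
  assumes "i < n" "j < n" "i' < n" "j' < n"
  shows "integrable (Wlaw n) (\<lambda>W. W (j, i) * W (j', i'))"
  unfolding Wlaw_def by (rule post_moment(1)) (use assms in auto)

lemma postE:
  assumes "i < n" "j < n" "i' < n" "j' < n"
  shows "(\<integral>W. W (j, i) * W (j', i') \<partial>Wlaw n) = (if (j, i) = (j', i') then 1 else 0)"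
  unfolding Wlaw_def by (rule post_moment(2)) (use assms in auto)


definition Pf :: "nat \<Rightarrow> real \<Rightarrow> real \<Rightarrow> (nat \<Rightarrow> nat \<Rightarrow> real) \<Rightarrow> nat \<Rightarrow> nat \<Rightarrow> nat \<times> nat \<Rightarrow> (nat \<times> nat \<Rightarrow> real) \<Rightarrow> real" where
  "Pf n sp sm X p q r W = X p (fst r) * sigma_s sp sm (U n X q (snd r) W) + X q (fst r) * sigma_s sp sm (U n X p (snd r) W)"

lemma T1_eq:
  "T1 n sp sm c X p q W1 W2 = c * sqrt c / (real n * sqrt (real n)) *
     (\<Sum>r\<in>{..<n} \<times> {..<n}. W2 (snd r, fst r) * Pf n sp sm X p q r W1)"
  unfolding T1_def Pf_def U_def
  using sum.cartesian_product[of "\<lambda>i j. W2 (j, i) * (X p i * sigma_s sp sm (\<Sum>j'<n. X q j' * W1 (j', j)) + X q i * sigma_s sp sm (\<Sum>j'<n. X p j' * W1 (j', j)))" "{..<n}" "{..<n}"]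
  by (simp add: case_prod_unfold)

lemma PfI:
  assumes r: "r \<in> {..<n} \<times> {..<n}" and s: "s \<in> {..<n} \<times> {..<n}"
  shows "integrable (Wlaw n) (\<lambda>W. Pf n sp sm X a b r W * Pf n sp sm X d w s W)"
proof -
  have j: "snd r < n" "snd s < n" using r s by auto
  have e: "Pf n sp sm X a b r W * Pf n sp sm X d w s W =
     X a (fst r) * X d (fst s) * (sigma_s sp sm (U n X b (snd r) W) * sigma_s sp sm (U n X w (snd s) W))
   + X a (fst r) * X w (fst s) * (sigma_s sp sm (U n X b (snd r) W) * sigma_s sp sm (U n X d (snd s) W))
   + X b (fst r) * X d (fst s) * (sigma_s sp sm (U n X a (snd r) W) * sigma_s sp sm (U n X w (snd s) W))
   + X b (fst r) * X w (fst s) * (sigma_s sp sm (U n X a (snd r) W) * sigma_s sp sm (U n X d (snd s) W))" for W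
    unfolding Pf_def by (simp add: algebra_simps)
  show ?thesis unfolding e
    by (intro Bochner_Integration.integrable_add Bochner_Integration.integrable_mult_right colI j)
qed

lemma PfE:
  assumes r: "r \<in> {..<n} \<times> {..<n}"
  shows "(\<integral>W. Pf n sp sm X a b r W * Pf n sp sm X d w r W \<partial>Wlaw n) =
     X a (fst r) * X d (fst r) * Mv n sp sm X b w + X a (fst r) * X w (fst r) * Mv n sp sm X b d
   + X b (fst r) * X d (fst r) * Mv n sp sm X a w + X b (fst r) * X w (fst r) * Mv n sp sm X a d"
proof -
  have j: "snd r < n" using r by auto
  have e: "Pf n sp sm X a b r W * Pf n sp sm X d w r W =
     X a (fst r) * X d (fst r) * (sigma_s sp sm (U n X b (snd r) W) * sigma_s sp sm (U n X w (snd r) W))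
   + X a (fst r) * X w (fst r) * (sigma_s sp sm (U n X b (snd r) W) * sigma_s sp sm (U n X d (snd r) W))
   + X b (fst r) * X d (fst r) * (sigma_s sp sm (U n X a (snd r) W) * sigma_s sp sm (U n X w (snd r) W))
   + X b (fst r) * X w (fst r) * (sigma_s sp sm (U n X a (snd r) W) * sigma_s sp sm (U n X d (snd r) W))" for W
    unfolding Pf_def by (simp add: algebra_simps)
  show ?thesis unfolding e
    by (simp add: Bochner_Integration.integral_add Bochner_Integration.integrable_add
        Bochner_Integration.integrable_mult_right colI[OF j j] colE[OF j])
qed

lemma Wlaw_prob: "prob_space (Wlaw n)"
  unfolding Wlaw_def by (rule gauss_pps)

lemma Wlaw_sf: "sigma_finite_measure (Wlaw n)"
  using Wlaw_prob prob_space.finite_measure finite_measure.sigma_finite_measure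
  by (metis prob_space_imp_sigma_finite)

lemmas Wprod = pair_prod[OF Wlaw_sf Wlaw_sf]

lemma main_integral:
  shows "(\<integral>W. T1 n sp sm c X a b (fst W) (snd W) * T1 n sp sm c X d w (fst W) (snd W) \<partial>(Wlaw n \<Otimes>\<^sub>M Wlaw n))
    = (c * sqrt c / (real n * sqrt (real n)))\<^sup>2 *
      (\<Sum>r\<in>{..<n} \<times> {..<n}. \<integral>W. Pf n sp sm X a b r W * Pf n sp sm X d w r W \<partial>Wlaw n)"
proof -
  define S where "S = {..<n} \<times> {..<n}"
  define k where "k = c * sqrt c / (real n * sqrt (real n))"
  define F where "F = (\<lambda>r s W1. Pf n sp sm X a b r W1 * Pf n sp sm X d w s W1)"
  define G where "G = (\<lambda>r s (W2::nat\<times>nat\<Rightarrow>real). W2 (snd r, fst r) * W2 (snd s, fst s))"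
  have pw: "T1 n sp sm c X a b (fst W) (snd W) * T1 n sp sm c X d w (fst W) (snd W)
      = k * k * (\<Sum>r\<in>S. \<Sum>s\<in>S. F r s (fst W) * G r s (snd W))" for W :: "(nat\<times>nat\<Rightarrow>real) \<times> (nat\<times>nat\<Rightarrow>real)"
  proof -
    have "T1 n sp sm c X a b (fst W) (snd W) * T1 n sp sm c X d w (fst W) (snd W)
      = k * k * ((\<Sum>r\<in>S. snd W (snd r, fst r) * Pf n sp sm X a b r (fst W)) * (\<Sum>s\<in>S. snd W (snd s, fst s) * Pf n sp sm X d w s (fst W)))"
      unfolding T1_eq k_def S_def by (simp add: algebra_simps)
    also have "\<dots> = k * k * (\<Sum>r\<in>S. \<Sum>s\<in>S. (snd W (snd r, fst r) * Pf n sp sm X a b r (fst W)) * (snd W (snd s, fst s) * Pf n sp sm X d w s (fst W)))"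
      by (simp only: sum_product)
    also have "\<dots> = k * k * (\<Sum>r\<in>S. \<Sum>s\<in>S. F r s (fst W) * G r s (snd W))"
      unfolding F_def G_def by (simp add: algebra_simps)
    finally show ?thesis .
  qed
  have Ii: "integrable (Wlaw n \<Otimes>\<^sub>M Wlaw n) (\<lambda>W. F r s (fst W) * G r s (snd W))" if "r \<in> S" "s \<in> S" for r s
  proof -
    have "integrable (Wlaw n) (F r s)" unfolding F_def using PfI that unfolding S_def by blast
    moreover have "integrable (Wlaw n) (G r s)" unfolding G_def using postI that unfolding S_def by auto
    ultimately show ?thesis by (rule Wprod(1))
  qed
  have Ie: "(\<integral>W. F r s (fst W) * G r s (snd W) \<partial>(Wlaw n \<Otimes>\<^sub>M Wlaw n)) = (if r = s then integral\<^sup>L (Wlaw n) (F r r) else 0)"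
    if "r \<in> S" "s \<in> S" for r s
  proof -
    have "integrable (Wlaw n) (F r s)" unfolding F_def using PfI that unfolding S_def by blast
    moreover have "integrable (Wlaw n) (G r s)" unfolding G_def using postI that unfolding S_def by auto
    ultimately have "(\<integral>W. F r s (fst W) * G r s (snd W) \<partial>(Wlaw n \<Otimes>\<^sub>M Wlaw n)) = integral\<^sup>L (Wlaw n) (F r s) * integral\<^sup>L (Wlaw n) (G r s)"
      by (rule Wprod(2))
    moreover have "integral\<^sup>L (Wlaw n) (G r s) = (if r = s then 1 else 0)"
      unfolding G_def using postE[of "fst r" n "snd r" "fst s" "snd s"] that unfolding S_def by (auto simp: prod_eq_iff)
    ultimately show ?thesis by simp
  qed
  have "(\<integral>W. T1 n sp sm c X a b (fst W) (snd W) * T1 n sp sm c X d w (fst W) (snd W) \<partial>(Wlaw n \<Otimes>\<^sub>M Wlaw n))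
      = k * k * (\<integral>W. (\<Sum>r\<in>S. \<Sum>s\<in>S. F r s (fst W) * G r s (snd W)) \<partial>(Wlaw n \<Otimes>\<^sub>M Wlaw n))"
    unfolding pw by simp
  also have "(\<integral>W. (\<Sum>r\<in>S. \<Sum>s\<in>S. F r s (fst W) * G r s (snd W)) \<partial>(Wlaw n \<Otimes>\<^sub>M Wlaw n))
      = (\<Sum>r\<in>S. \<Sum>s\<in>S. (\<integral>W. F r s (fst W) * G r s (snd W) \<partial>(Wlaw n \<Otimes>\<^sub>M Wlaw n)))"
    using Ii by (simp add: Bochner_Integration.integral_sum Bochner_Integration.integrable_sum)
  also have "\<dots> = (\<Sum>r\<in>S. \<Sum>s\<in>S. (if r = s then integral\<^sup>L (Wlaw n) (F r r) else 0))"
    by (intro sum.cong refl) (simp add: Ie)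
  also have "\<dots> = (\<Sum>r\<in>S. integral\<^sup>L (Wlaw n) (F r r))"
    unfolding S_def by (simp add: sum.delta)
  finally show ?thesis unfolding k_def S_def F_def by (simp add: power2_eq_square)
qed


lemma sum_fst_S:
  fixes g :: "nat \<Rightarrow> real"
  shows "(\<Sum>r\<in>{..<n} \<times> {..<n}. g (fst r)) = real n * (\<Sum>i<n. g i)"
proof -
  have "(\<Sum>r\<in>{..<n} \<times> {..<n}. g (fst r)) = (\<Sum>i<n. \<Sum>j<n. g i)"
    using sum.cartesian_product[of "\<lambda>i j. g i" "{..<n}" "{..<n}"] by (simp add: case_prod_unfold)
  also have "\<dots> = real n * (\<Sum>i<n. g i)" by (simp add: sum_distrib_left)
  finally show ?thesis .
qed

lemma part1:
  assumes n: "n > 0" and c: "c \<ge> 0"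
  shows "(\<integral>W. T1 n sp sm c X a b (fst W) (snd W) * T1 n sp sm c X d w (fst W) (snd W) \<partial>(Wlaw n \<Otimes>\<^sub>M Wlaw n))
    = Fterm n sp sm c X a b d w"
proof -
  define S where "S = {..<n} \<times> {..<n}"
  have "(\<Sum>r\<in>S. \<integral>W. Pf n sp sm X a b r W * Pf n sp sm X d w r W \<partial>Wlaw n)
     = (\<Sum>r\<in>S. X a (fst r) * X d (fst r) * Mv n sp sm X b w + X a (fst r) * X w (fst r) * Mv n sp sm X b d
   + X b (fst r) * X d (fst r) * Mv n sp sm X a w + X b (fst r) * X w (fst r) * Mv n sp sm X a d)"
    unfolding S_def by (intro sum.cong refl PfE)
  also have "\<dots> = real n * (Gm n X a d * Mv n sp sm X b w + Gm n X a w * Mv n sp sm X b d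
      + Gm n X b d * Mv n sp sm X a w + Gm n X b w * Mv n sp sm X a d)"
  proof -
    have h: "(\<Sum>r\<in>{..<n} \<times> {..<n}. X p (fst r) * X q (fst r) * M) = real n * (Gm n X p q * M)" for p q M
      using sum_fst_S[of "\<lambda>i. X p i * X q i * M" n] by (simp add: Gm_def sum_distrib_right)
    show ?thesis unfolding S_def by (simp only: sum.distrib h) (simp add: algebra_simps)
  qed
  finally have E: "(\<Sum>r\<in>S. \<integral>W. Pf n sp sm X a b r W * Pf n sp sm X d w r W \<partial>Wlaw n) = \<dots>" .
  have k2: "(c * sqrt c / (real n * sqrt (real n)))\<^sup>2 = c ^ 3 / real n ^ 3"
  proof -
    have "(c * sqrt c / (real n * sqrt (real n)))\<^sup>2 = (c\<^sup>2 * (sqrt c)\<^sup>2) / ((real n)\<^sup>2 * (sqrt (real n))\<^sup>2)"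
      by (simp add: power_divide power_mult_distrib)
    also have "\<dots> = c ^ 3 / real n ^ 3" using c by (simp add: power2_eq_square power3_eq_cube)
    finally show ?thesis .
  qed
  have V: "Vmat n c X p q = c / real n * Gm n X p q" for p q unfolding Vmat_def Gm_def ..
  show ?thesis
  proof (cases "c = 0")
    case True
    then show ?thesis unfolding main_integral Fterm_def Let_def V by simp
  next
    case False
    then have cpos: "c > 0" using c by simp
    define e where "e = c / real n"
    have epos: "e > 0" unfolding e_def using cpos n by simp
    have G0: "Gm n X p p \<ge> 0" for p unfolding Gm_def by (auto intro: sum_nonneg)
    have rho: "rhomat n c X p q = Gm n X p q / sqrt (Gm n X p p * Gm n X q q)" for p q
    proof -
      have "sqrt (e * Gm n X p p * (e * Gm n X q q)) = e * sqrt (Gm n X p p * Gm n X q q)"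
        using epos by (simp add: real_sqrt_mult real_sqrt_abs' algebra_simps)
      then show ?thesis unfolding rhomat_def V e_def[symmetric] using epos by simp
    qed
    have sq: "sqrt (Vmat n c X p p * Vmat n c X q q) = e * (sqrt (Gm n X p p) * sqrt (Gm n X q q))" for p q
      unfolding V e_def[symmetric] using epos G0 by (simp add: real_sqrt_mult algebra_simps)
    have lhs: "(\<integral>W. T1 n sp sm c X a b (fst W) (snd W) * T1 n sp sm c X d w (fst W) (snd W) \<partial>(Wlaw n \<Otimes>\<^sub>M Wlaw n))
      = c ^ 3 / real n ^ 3 * (real n * (Gm n X a d * Mv n sp sm X b w + Gm n X a w * Mv n sp sm X b d
      + Gm n X b d * Mv n sp sm X a w + Gm n X b w * Mv n sp sm X a d))"
      unfolding main_integral S_def[symmetric] E k2 ..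
    have rhs: "Fterm n sp sm c X a b d w = e * e * c * (Gm n X a d * Mv n sp sm X b w + Gm n X a w * Mv n sp sm X b d
      + Gm n X b d * Mv n sp sm X a w + Gm n X b w * Mv n sp sm X a d)"
      unfolding Fterm_def Let_def sq rho Mv_def unfolding V e_def[symmetric] by (simp add: algebra_simps)
    show ?thesis unfolding lhs rhs e_def using n by (simp add: power3_eq_cube field_simps)
  qed
qed

lemma G2_neg_distr: "distr G2 borel (\<lambda>z. (- fst z, - snd z)) = G2"
proof -
  have nb: "(\<lambda>z::real\<times>real. (- fst z, - snd z)) \<in> measurable borel borel"
    by (intro borel_measurable_continuous_onI continuous_intros)
  have nm: "(\<lambda>z::real\<times>real. (- fst z, - snd z)) \<in> measurable G2 borel" by (rule G2_measN[OF nb])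
  show ?thesis
  proof (rule measure_eqI)
    show "sets (distr G2 borel (\<lambda>z. (- fst z, - snd z))) = sets G2" using G2_sets by simp
  next
    fix A assume "A \<in> sets (distr G2 borel (\<lambda>z. (- fst z, - snd z)))"
    then have A: "A \<in> sets borel" by simp
    have im: "indicator A \<in> borel_measurable (borel :: (real\<times>real) measure)" using A by simp
    have "emeasure (distr G2 borel (\<lambda>z. (- fst z, - snd z))) A = (\<integral>\<^sup>+z. indicator A z \<partial>distr G2 borel (\<lambda>z. (- fst z, - snd z)))"
      using A by (simp add: nn_integral_indicator)
    also have "\<dots> = (\<integral>\<^sup>+z. indicator A (- fst z, - snd z) \<partial>G2)"
      by (rule nn_integral_distr[OF nm]) (use im in simp)
    also have "\<dots> = (\<integral>\<^sup>+z. indicator A ((-1) * fst z - 0 * snd z, 0 * fst z + (-1) * snd z) \<partial>G2)" by simp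
    also have "\<dots> = (\<integral>\<^sup>+z. indicator A z \<partial>G2)" by (rule rotG[OF im]) simp
    also have "\<dots> = emeasure G2 A" using A G2_sets by (simp add: nn_integral_indicator)
    finally show "emeasure (distr G2 borel (\<lambda>z. (- fst z, - snd z))) A = emeasure G2 A" .
  qed
qed

lemma G2_odd:
  fixes f :: "real \<times> real \<Rightarrow> real"
  assumes fm: "f \<in> borel_measurable borel" and odd: "\<And>z. f (- fst z, - snd z) = - f z"
  shows "(\<integral>z. f z \<partial>G2) = 0"
proof -
  have nb: "(\<lambda>z::real\<times>real. (- fst z, - snd z)) \<in> measurable borel borel"
    by (intro borel_measurable_continuous_onI continuous_intros)
  have nm: "(\<lambda>z::real\<times>real. (- fst z, - snd z)) \<in> measurable G2 borel" by (rule G2_measN[OF nb])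
  have "(\<integral>z. f z \<partial>G2) = (\<integral>z. f z \<partial>distr G2 borel (\<lambda>z. (- fst z, - snd z)))" by (simp only: G2_neg_distr)
  also have "\<dots> = (\<integral>z. f (- fst z, - snd z) \<partial>G2)" by (rule integral_distr[OF nm fm])
  also have "\<dots> = - (\<integral>z. f z \<partial>G2)" by (simp add: odd)
  finally show ?thesis by simp
qed


lemma intG2_bound:
  fixes f :: "real \<times> real \<Rightarrow> real"
  assumes fm: "f \<in> borel_measurable borel" and b: "\<And>z. \<bar>f z\<bar> \<le> K * ((fst z)\<^sup>2 + \<bar>fst z\<bar> * \<bar>snd z\<bar>)"
  shows "integrable G2 f"
proof (rule Bochner_Integration.integrable_bound)
  show "integrable G2 (\<lambda>z. K * ((fst z)\<^sup>2 + \<bar>fst z\<bar> * \<bar>snd z\<bar>))"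
    by (intro Bochner_Integration.integrable_mult_right Bochner_Integration.integrable_add G2_fst_sq(1) G2_abs_abs)
  show "f \<in> borel_measurable G2" by (rule G2_measN[OF fm])
  show "AE z in G2. norm (f z) \<le> norm (K * ((fst z)\<^sup>2 + \<bar>fst z\<bar> * \<bar>snd z\<bar>))"
  proof (rule AE_I2)
    fix z :: "real \<times> real"
    have "\<bar>f z\<bar> \<le> K * ((fst z)\<^sup>2 + \<bar>fst z\<bar> * \<bar>snd z\<bar>)" by (rule b)
    also have "\<dots> \<le> \<bar>K * ((fst z)\<^sup>2 + \<bar>fst z\<bar> * \<bar>snd z\<bar>)\<bar>" by simp
    finally show "norm (f z) \<le> norm (K * ((fst z)\<^sup>2 + \<bar>fst z\<bar> * \<bar>snd z\<bar>))" by simp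
  qed
qed

lemma gv_bound:
  fixes z :: "real \<times> real"
  shows "\<bar>fst z\<bar> * \<bar>\<rho> * fst z + \<tau> * snd z\<bar> \<le> (\<bar>\<rho>\<bar> + \<bar>\<tau>\<bar>) * ((fst z)\<^sup>2 + \<bar>fst z\<bar> * \<bar>snd z\<bar>)"
proof -
  have "\<bar>\<rho> * fst z + \<tau> * snd z\<bar> \<le> \<bar>\<rho>\<bar> * \<bar>fst z\<bar> + \<bar>\<tau>\<bar> * \<bar>snd z\<bar>"
    by (metis abs_mult abs_triangle_ineq)
  then have "\<bar>fst z\<bar> * \<bar>\<rho> * fst z + \<tau> * snd z\<bar> \<le> \<bar>fst z\<bar> * (\<bar>\<rho>\<bar> * \<bar>fst z\<bar> + \<bar>\<tau>\<bar> * \<bar>snd z\<bar>)"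
    by (rule mult_left_mono) simp
  also have "\<dots> = \<bar>\<rho>\<bar> * (fst z)\<^sup>2 + \<bar>\<tau>\<bar> * (\<bar>fst z\<bar> * \<bar>snd z\<bar>)"
    by (simp add: power2_eq_square algebra_simps abs_mult_self_eq)
  also have "\<dots> \<le> (\<bar>\<rho>\<bar> + \<bar>\<tau>\<bar>) * ((fst z)\<^sup>2 + \<bar>fst z\<bar> * \<bar>snd z\<bar>)"
    by (simp add: algebra_simps)
  finally show ?thesis .
qed

lemma cont_meas2: "continuous_on UNIV f \<Longrightarrow> (f :: real \<times> real \<Rightarrow> real) \<in> borel_measurable borel"
  by (rule borel_measurable_continuous_onI)

lemma Jfacts:
  fixes \<rho> \<tau> :: real
  assumes r: "\<rho>\<^sup>2 + \<tau>\<^sup>2 = 1"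
  defines "v \<equiv> (\<lambda>z::real\<times>real. \<rho> * fst z + \<tau> * snd z)"
  shows "integrable G2 (\<lambda>z. fst z * v z)" "(\<integral>z. fst z * v z \<partial>G2) = \<rho>"
    "integrable G2 (\<lambda>z. fst z * \<bar>v z\<bar>)" "(\<integral>z. fst z * \<bar>v z\<bar> \<partial>G2) = 0"
    "integrable G2 (\<lambda>z. \<bar>fst z\<bar> * v z)" "(\<integral>z. \<bar>fst z\<bar> * v z \<partial>G2) = 0"
    "integrable G2 (\<lambda>z. \<bar>fst z\<bar> * \<bar>v z\<bar>)" "0 \<le> (\<integral>z. \<bar>fst z\<bar> * \<bar>v z\<bar> \<partial>G2)"
    "(\<integral>z. \<bar>fst z\<bar> * \<bar>v z\<bar> \<partial>G2) \<le> 1"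
proof -
  define K where "K = \<bar>\<rho>\<bar> + \<bar>\<tau>\<bar>"
  have gb: "\<bar>fst z\<bar> * \<bar>v z\<bar> \<le> K * ((fst z)\<^sup>2 + \<bar>fst z\<bar> * \<bar>snd z\<bar>)" for z
    unfolding v_def K_def by (rule gv_bound)
  have cv: "continuous_on UNIV v" unfolding v_def by (intro continuous_intros)
  show i1: "integrable G2 (\<lambda>z. fst z * v z)"
    by (rule intG2_bound[of _ K]) (auto intro!: cont_meas2 continuous_intros cv simp: abs_mult gb)
  show i2: "integrable G2 (\<lambda>z. fst z * \<bar>v z\<bar>)"
    by (rule intG2_bound[of _ K]) (auto intro!: cont_meas2 continuous_intros cv simp: abs_mult gb)
  show i3: "integrable G2 (\<lambda>z. \<bar>fst z\<bar> * v z)"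
    by (rule intG2_bound[of _ K]) (auto intro!: cont_meas2 continuous_intros cv simp: abs_mult gb)
  show i4: "integrable G2 (\<lambda>z. \<bar>fst z\<bar> * \<bar>v z\<bar>)"
    by (rule intG2_bound[of _ K]) (auto intro!: cont_meas2 continuous_intros cv simp: abs_mult gb)
  show "(\<integral>z. fst z * v z \<partial>G2) = \<rho>"
  proof -
    have "(\<integral>z. fst z * v z \<partial>G2) = (\<integral>z. \<rho> * (fst z)\<^sup>2 + \<tau> * (fst z * snd z) \<partial>G2)"
      unfolding v_def by (simp add: power2_eq_square algebra_simps)
    also have "\<dots> = \<rho> * (\<integral>z. (fst z)\<^sup>2 \<partial>G2) + \<tau> * (\<integral>z. fst z * snd z \<partial>G2)"
      by (simp add: Bochner_Integration.integral_add G2_fst_sq(1) G2_fst_snd(1))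
    also have "\<dots> = \<rho>" using G2_fst_sq(2) G2_fst_snd(2) by simp
    finally show ?thesis .
  qed
  show "(\<integral>z. fst z * \<bar>v z\<bar> \<partial>G2) = 0"
    by (rule G2_odd) (auto intro!: cont_meas2 continuous_intros cv simp: v_def abs_minus_commute[of _ 0] algebra_simps)
  show "(\<integral>z. \<bar>fst z\<bar> * v z \<partial>G2) = 0"
    by (rule G2_odd) (auto intro!: cont_meas2 continuous_intros cv simp: v_def algebra_simps)
  show "0 \<le> (\<integral>z. \<bar>fst z\<bar> * \<bar>v z\<bar> \<partial>G2)" by simp
  have iv: "integrable G2 (\<lambda>z. (v z)\<^sup>2)"
  proof -
    have "integrable G2 (\<lambda>z. \<rho>\<^sup>2 * (fst z)\<^sup>2 + 2 * \<rho> * \<tau> * (fst z * snd z) + \<tau>\<^sup>2 * (snd z)\<^sup>2)"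
      by (intro Bochner_Integration.integrable_add Bochner_Integration.integrable_mult_right G2_fst_sq(1) G2_fst_snd(1) G2_snd_sq(1))
    then show ?thesis unfolding v_def by (simp add: power2_eq_square algebra_simps)
  qed
  have v2: "(\<integral>z. (v z)\<^sup>2 \<partial>G2) = 1"
  proof -
    have "(\<integral>z. (v z)\<^sup>2 \<partial>G2) = (\<integral>z. \<rho>\<^sup>2 * (fst z)\<^sup>2 + 2 * \<rho> * \<tau> * (fst z * snd z) + \<tau>\<^sup>2 * (snd z)\<^sup>2 \<partial>G2)"
      unfolding v_def by (simp add: power2_eq_square algebra_simps)
    also have "\<dots> = \<rho>\<^sup>2 * (\<integral>z. (fst z)\<^sup>2 \<partial>G2) + 2 * \<rho> * \<tau> * (\<integral>z. fst z * snd z \<partial>G2) + \<tau>\<^sup>2 * (\<integral>z. (snd z)\<^sup>2 \<partial>G2)"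
      by (simp add: Bochner_Integration.integral_add Bochner_Integration.integrable_add G2_fst_sq(1) G2_fst_snd(1) G2_snd_sq(1))
    also have "\<dots> = 1" using G2_fst_sq(2) G2_fst_snd(2) G2_snd_sq(2) r by simp
    finally show ?thesis .
  qed
  have "(\<integral>z. \<bar>fst z\<bar> * \<bar>v z\<bar> \<partial>G2) \<le> (\<integral>z. ((fst z)\<^sup>2 + (v z)\<^sup>2) / 2 \<partial>G2)"
  proof (rule integral_mono[OF i4])
    show "integrable G2 (\<lambda>z. ((fst z)\<^sup>2 + (v z)\<^sup>2) / 2)"
      by (intro Bochner_Integration.integrable_divide Bochner_Integration.integrable_add G2_fst_sq(1) iv)
    fix z :: "real \<times> real"
    have "0 \<le> (\<bar>fst z\<bar> - \<bar>v z\<bar>)\<^sup>2" by simp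
    then show "\<bar>fst z\<bar> * \<bar>v z\<bar> \<le> ((fst z)\<^sup>2 + (v z)\<^sup>2) / 2"
      by (simp add: power2_eq_square algebra_simps)
  qed
  also have "\<dots> = 1"
    using G2_fst_sq v2 iv by (simp add: Bochner_Integration.integral_add)
  finally show "(\<integral>z. \<bar>fst z\<bar> * \<bar>v z\<bar> \<partial>G2) \<le> 1" .
qed


lemma sigma_ab: "sigma_s sp sm x = (sp + sm) / 2 * x + (sp - sm) / 2 * \<bar>x\<bar>"
  unfolding sigma_s_def by (cases "x \<ge> 0") (auto simp: max_def min_def field_simps)

definition Jf :: "real \<Rightarrow> real" where
  "Jf \<rho> = (\<integral>z. \<bar>fst z\<bar> * \<bar>\<rho> * fst z + sqrt (1 - \<rho>\<^sup>2) * snd z\<bar> \<partial>G2)"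

lemma K1_formula:
  assumes r: "\<bar>\<rho>\<bar> \<le> 1"
  shows "K1 sp sm \<rho> = ((sp + sm) / 2)\<^sup>2 * \<rho> + ((sp - sm) / 2)\<^sup>2 * Jf \<rho>"
    and "0 \<le> Jf \<rho>" "Jf \<rho> \<le> 1"
proof -
  define \<tau> where "\<tau> = sqrt (1 - \<rho>\<^sup>2)"
  have r2: "\<rho>\<^sup>2 \<le> 1" using power_mono[OF r abs_ge_zero, of 2] by simp
  have rt: "\<rho>\<^sup>2 + \<tau>\<^sup>2 = 1" unfolding \<tau>_def using r2 by simp
  define v where "v = (\<lambda>z::real\<times>real. \<rho> * fst z + \<tau> * snd z)"
  have vz: "v z = \<rho> * fst z + \<tau> * snd z" for z unfolding v_def ..
  have JF: "integrable G2 (\<lambda>z. fst z * v z)" "(\<integral>z. fst z * v z \<partial>G2) = \<rho>"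
    "integrable G2 (\<lambda>z. fst z * \<bar>v z\<bar>)" "(\<integral>z. fst z * \<bar>v z\<bar> \<partial>G2) = 0"
    "integrable G2 (\<lambda>z. \<bar>fst z\<bar> * v z)" "(\<integral>z. \<bar>fst z\<bar> * v z \<partial>G2) = 0"
    "integrable G2 (\<lambda>z. \<bar>fst z\<bar> * \<bar>v z\<bar>)" "0 \<le> (\<integral>z. \<bar>fst z\<bar> * \<bar>v z\<bar> \<partial>G2)"
    "(\<integral>z. \<bar>fst z\<bar> * \<bar>v z\<bar> \<partial>G2) \<le> 1"
    unfolding vz by (rule Jfacts[OF rt])+
  define A where "A = (sp + sm) / 2"
  define B where "B = (sp - sm) / 2"
  have pt: "sigma_s sp sm (fst z) * sigma_s sp sm (v z) =
     A * A * (fst z * v z) + A * B * (fst z * \<bar>v z\<bar>) + A * B * (\<bar>fst z\<bar> * v z) + B * B * (\<bar>fst z\<bar> * \<bar>v z\<bar>)" for z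
    unfolding sigma_ab[of sp sm] A_def[symmetric] B_def[symmetric] by (simp add: algebra_simps)
  have "K1 sp sm \<rho> = (\<integral>z. sigma_s sp sm (fst z) * sigma_s sp sm (v z) \<partial>G2)"
    unfolding K1_def v_def \<tau>_def ..
  also have "\<dots> = (\<integral>z. A * A * (fst z * v z) + A * B * (fst z * \<bar>v z\<bar>) + A * B * (\<bar>fst z\<bar> * v z) + B * B * (\<bar>fst z\<bar> * \<bar>v z\<bar>) \<partial>G2)"
    by (simp only: pt)
  also have "\<dots> = A * A * (\<integral>z. fst z * v z \<partial>G2) + A * B * (\<integral>z. fst z * \<bar>v z\<bar> \<partial>G2)
       + A * B * (\<integral>z. \<bar>fst z\<bar> * v z \<partial>G2) + B * B * (\<integral>z. \<bar>fst z\<bar> * \<bar>v z\<bar> \<partial>G2)"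
    using JF(1,3,5,7) by (simp add: Bochner_Integration.integral_add Bochner_Integration.integrable_add)
  also have "\<dots> = A\<^sup>2 * \<rho> + B\<^sup>2 * Jf \<rho>"
    using JF(2,4,6) unfolding Jf_def v_def \<tau>_def by (simp add: power2_eq_square)
  finally show "K1 sp sm \<rho> = ((sp + sm) / 2)\<^sup>2 * \<rho> + ((sp - sm) / 2)\<^sup>2 * Jf \<rho>" unfolding A_def B_def .
  show "0 \<le> Jf \<rho>" "Jf \<rho> \<le> 1" using JF(8,9) unfolding Jf_def v_def \<tau>_def by simp_all
qed

lemma Jf1: "Jf 1 = 1"
  unfolding Jf_def using G2_fst_sq(2) by (simp add: abs_mult_self_eq power2_eq_square)

lemma c_int: "(\<integral>g. (sigma_s sp sm g)\<^sup>2 \<partial>gauss) = ((sp + sm) / 2)\<^sup>2 + ((sp - sm) / 2)\<^sup>2"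
proof -
  define L where "L = \<bar>sp\<bar> + \<bar>sm\<bar>"
  have si: "integrable gauss (\<lambda>g. (sigma_s sp sm g)\<^sup>2)"
  proof (rule Bochner_Integration.integrable_bound)
    show "integrable gauss (\<lambda>x. L * L * x\<^sup>2)"
      by (intro Bochner_Integration.integrable_mult_right gauss_int_sq)
    show "(\<lambda>g. (sigma_s sp sm g)\<^sup>2) \<in> borel_measurable gauss" by measurable
    show "AE x in gauss. norm ((sigma_s sp sm x)\<^sup>2) \<le> norm (L * L * x\<^sup>2)"
    proof (rule AE_I2)
      fix x
      have b: "\<bar>sigma_s sp sm x\<bar> \<le> L * \<bar>x\<bar>" unfolding L_def by (rule sigma_bound)
      have "(sigma_s sp sm x)\<^sup>2 = \<bar>sigma_s sp sm x\<bar>\<^sup>2" by simp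
      also have "\<dots> \<le> (L * \<bar>x\<bar>)\<^sup>2" by (rule power_mono[OF b]) simp
      also have "\<dots> = L * L * x\<^sup>2" by (simp add: power2_eq_square)
      finally show "norm ((sigma_s sp sm x)\<^sup>2) \<le> norm (L * L * x\<^sup>2)" by simp
    qed
  qed
  have "(\<integral>g. (sigma_s sp sm g)\<^sup>2 \<partial>gauss) = (\<integral>g. (sigma_s sp sm g)\<^sup>2 \<partial>gauss) * (\<integral>g. 1 \<partial>gauss)" by simp
  also have "\<dots> = (\<integral>z. (sigma_s sp sm (fst z))\<^sup>2 * 1 \<partial>G2)"
    by (rule G2prod(2)[OF si gauss_int_const, symmetric])
  also have "\<dots> = K1 sp sm 1" unfolding K1_def by (simp add: power2_eq_square)
  also have "\<dots> = ((sp + sm) / 2)\<^sup>2 + ((sp - sm) / 2)\<^sup>2" using K1_formula(1)[of 1 sp sm] Jf1 by simp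
  finally show ?thesis .
qed

lemma termbound:
  fixes f :: "real \<Rightarrow> real"
  assumes fE: "\<And>\<rho>. \<bar>\<rho>\<bar> \<le> 1 \<Longrightarrow> \<bar>f \<rho> - \<rho>\<bar> \<le> E"
    and nn: "0 \<le> Vpp" "0 \<le> Vqq" "0 \<le> Vrr" "0 \<le> Vss"
    and cs1: "Vpq\<^sup>2 \<le> Vpp * Vqq" and cs2: "Vrs\<^sup>2 \<le> Vrr * Vss"
    and bd: "Vpp \<le> B" "Vqq \<le> B" "Vrr \<le> B" "Vss \<le> B"
  shows "\<bar>Vpq * sqrt (Vrr * Vss) * f (Vrs / sqrt (Vrr * Vss)) - Vpq * Vrs\<bar> \<le> B * B * E"
proof -
  have E0: "E \<ge> 0" using fE[of 0] by simp
  have B0: "B \<ge> 0" using nn bd by linarith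
  define s where "s = sqrt (Vrr * Vss)"
  have s0: "s \<ge> 0" unfolding s_def using nn by simp
  have sB: "s \<le> B"
  proof -
    have "Vrr * Vss \<le> B * B" by (rule mult_mono[OF bd(3) bd(4) B0 nn(4)])
    then have "s \<le> sqrt (B * B)" unfolding s_def by (rule real_sqrt_le_mono)
    then show ?thesis using B0 by simp
  qed
  have pqB: "\<bar>Vpq\<bar> \<le> B"
  proof -
    have "Vpp * Vqq \<le> B * B" by (rule mult_mono[OF bd(1) bd(2) B0 nn(2)])
    then have "Vpq\<^sup>2 \<le> B\<^sup>2" using cs1 by (simp add: power2_eq_square)
    then have "sqrt (Vpq\<^sup>2) \<le> sqrt (B\<^sup>2)" by (rule real_sqrt_le_mono)
    then show ?thesis using B0 by simp
  qed
  have rsS: "\<bar>Vrs\<bar> \<le> s"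
  proof -
    have "\<bar>Vrs\<bar> = sqrt (Vrs\<^sup>2)" by simp
    also have "\<dots> \<le> s" unfolding s_def by (rule real_sqrt_le_mono[OF cs2])
    finally show ?thesis .
  qed
  show ?thesis
  proof (cases "s = 0")
    case True
    then have "Vrs = 0" using rsS by simp
    have "\<bar>Vpq * s * f (Vrs / s) - Vpq * Vrs\<bar> \<le> B * B * E" using True \<open>Vrs = 0\<close> B0 E0 by simp
    then show ?thesis unfolding s_def .
  next
    case False
    then have spos: "s > 0" using s0 by simp
    define \<rho> where "\<rho> = Vrs / s"
    have rho1: "\<bar>\<rho>\<bar> \<le> 1"
    proof -
      have "\<bar>\<rho>\<bar> = \<bar>Vrs\<bar> / s" unfolding \<rho>_def by (simp only: abs_divide abs_of_nonneg[OF s0])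
      also have "\<dots> \<le> 1" using rsS spos by (simp add: divide_le_eq_1)
      finally show ?thesis .
    qed
    have vr: "Vrs = s * \<rho>" unfolding \<rho>_def using spos by simp
    have e: "Vpq * s * f \<rho> - Vpq * Vrs = Vpq * s * (f \<rho> - \<rho>)"
      by (subst vr) (simp add: right_diff_distrib)
    have "\<bar>Vpq * s * (f \<rho> - \<rho>)\<bar> = \<bar>Vpq\<bar> * s * \<bar>f \<rho> - \<rho>\<bar>" using s0 by (simp add: abs_mult)
    also have "\<dots> \<le> B * B * E"
    proof (rule mult_mono)
      show "\<bar>Vpq\<bar> * s \<le> B * B" by (rule mult_mono[OF pqB sB B0 s0])
      show "\<bar>f \<rho> - \<rho>\<bar> \<le> E" by (rule fE[OF rho1])
      show "0 \<le> B * B" using B0 by simp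
      show "0 \<le> \<bar>f \<rho> - \<rho>\<bar>" by simp
    qed
    finally have "\<bar>Vpq * s * f \<rho> - Vpq * Vrs\<bar> \<le> B * B * E" using e by simp
    then show ?thesis unfolding \<rho>_def s_def .
  qed
qed

lemma ratio_bound:
  fixes cp cm :: real and n :: nat
  assumes n: "n > 0"
  defines "A \<equiv> (s_par n cp + s_par n cm) / 2" and "Bb \<equiv> (s_par n cp - s_par n cm) / 2"
  assumes Q: "A\<^sup>2 + Bb\<^sup>2 > 0"
  shows "Bb\<^sup>2 / (A\<^sup>2 + Bb\<^sup>2) \<le> ((cp - cm)\<^sup>2 + (\<bar>cp\<bar> + \<bar>cm\<bar> + 1)\<^sup>2) / real n"
proof -
  define K where "K = (cp - cm)\<^sup>2 + (\<bar>cp\<bar> + \<bar>cm\<bar> + 1)\<^sup>2"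
  have npos: "real n > 0" using n by simp
  have sn: "sqrt (real n) > 0" using npos by simp
  have Bb2: "Bb\<^sup>2 = (cp - cm)\<^sup>2 / (4 * real n)"
  proof -
    have "Bb = (cp - cm) / (2 * sqrt (real n))" unfolding Bb_def s_par_def
      by (simp add: diff_divide_distrib[symmetric] divide_divide_eq_left mult.commute)
    then have "Bb\<^sup>2 = (cp - cm)\<^sup>2 / (4 * (sqrt (real n))\<^sup>2)" by (simp add: power_divide power_mult_distrib)
    then show ?thesis using npos by simp
  qed
  have le1: "Bb\<^sup>2 / (A\<^sup>2 + Bb\<^sup>2) \<le> 1" using Q by (simp add: divide_le_eq_1)
  show ?thesis
  proof (cases "sqrt (real n) \<ge> \<bar>cp\<bar> + \<bar>cm\<bar> + 1")
    case True
    have "\<bar>(cp + cm) / (2 * sqrt (real n))\<bar> \<le> 1 / 2"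
    proof -
      have "\<bar>cp + cm\<bar> \<le> sqrt (real n)" using True abs_triangle_ineq[of cp cm] by linarith
      then have "\<bar>cp + cm\<bar> / (2 * sqrt (real n)) \<le> sqrt (real n) / (2 * sqrt (real n))"
        using sn by (intro divide_right_mono) auto
      also have "\<dots> = 1 / 2" using sn by simp
      finally show ?thesis using sn by (simp only: abs_divide abs_mult abs_of_pos)
    qed
    moreover have "A = 1 + (cp + cm) / (2 * sqrt (real n))"
    proof -
      have aux: "(1 + p / r + (1 + q / r)) / 2 = 1 + (p + q) / (2 * r)" if "r \<noteq> 0" for p q r :: real
        using that by (simp add: field_simps)
      show ?thesis unfolding A_def s_par_def using aux[of "sqrt (real n)" cp cm] sn by simp
    qed
    ultimately have "A \<ge> 1 / 2" by linarith
    then have "A\<^sup>2 \<ge> (1/2)\<^sup>2" by (intro power_mono) auto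
    then have a4: "1 / 4 \<le> A\<^sup>2" by (simp add: power_divide)
    have Q4: "A\<^sup>2 + Bb\<^sup>2 \<ge> 1 / 4" using a4 zero_le_power2[of Bb] by linarith
    have "Bb\<^sup>2 / (A\<^sup>2 + Bb\<^sup>2) \<le> Bb\<^sup>2 / (1 / 4)"
      by (rule divide_left_mono[OF Q4]) (use Q in auto)
    also have "\<dots> = (cp - cm)\<^sup>2 / real n" unfolding Bb2 using npos by simp
    also have "\<dots> \<le> K / real n" unfolding K_def using npos by (intro divide_right_mono) auto
    finally show ?thesis unfolding K_def .
  next
    case False
    then have "sqrt (real n) < \<bar>cp\<bar> + \<bar>cm\<bar> + 1" by simp
    then have "(sqrt (real n))\<^sup>2 < (\<bar>cp\<bar> + \<bar>cm\<bar> + 1)\<^sup>2"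
      by (rule power_strict_mono) auto
    then have "real n < (\<bar>cp\<bar> + \<bar>cm\<bar> + 1)\<^sup>2" by simp
    then have "real n \<le> K" unfolding K_def using zero_le_power2[of "cp - cm"] by linarith
    then have "1 \<le> K / real n" using npos by (simp add: le_divide_eq)
    then show ?thesis using le1 unfolding K_def by linarith
  qed
qed

lemma c_const_eq: "c_const sp sm = 1 / (((sp + sm) / 2)\<^sup>2 + ((sp - sm) / 2)\<^sup>2)"
  unfolding c_const_def c_int ..

lemma c_const_nonneg: "c_const sp sm \<ge> 0"
  unfolding c_const_eq by simp

lemma eps_bound:
  assumes Q: "((sp + sm) / 2)\<^sup>2 + ((sp - sm) / 2)\<^sup>2 > 0" and r: "\<bar>\<rho>\<bar> \<le> 1"
  shows "\<bar>c_const sp sm * K1 sp sm \<rho> - \<rho>\<bar> \<le> 2 * (((sp - sm) / 2)\<^sup>2 / (((sp + sm) / 2)\<^sup>2 + ((sp - sm) / 2)\<^sup>2))"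
proof -
  define A where "A = (sp + sm) / 2"
  define Bb where "Bb = (sp - sm) / 2"
  define Q where "Q = A\<^sup>2 + Bb\<^sup>2"
  have Qp: "Q > 0" using Q unfolding Q_def A_def Bb_def .
  have K: "K1 sp sm \<rho> = A\<^sup>2 * \<rho> + Bb\<^sup>2 * Jf \<rho>" unfolding A_def Bb_def by (rule K1_formula(1)[OF r])
  have J: "0 \<le> Jf \<rho>" "Jf \<rho> \<le> 1" by (rule K1_formula(2)[OF r], rule K1_formula(3)[OF r])
  have e: "c_const sp sm * K1 sp sm \<rho> - \<rho> = Bb\<^sup>2 / Q * (Jf \<rho> - \<rho>)"
  proof -
    have "c_const sp sm * K1 sp sm \<rho> - \<rho> = (A\<^sup>2 * \<rho> + Bb\<^sup>2 * Jf \<rho>) / Q - \<rho>"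
      unfolding c_const_eq A_def[symmetric] Bb_def[symmetric] Q_def[symmetric] K by simp
    also have "\<dots> = (A\<^sup>2 * \<rho> + Bb\<^sup>2 * Jf \<rho> - Q * \<rho>) / Q" using Qp by (simp add: diff_divide_distrib)
    also have "A\<^sup>2 * \<rho> + Bb\<^sup>2 * Jf \<rho> - Q * \<rho> = Bb\<^sup>2 * (Jf \<rho> - \<rho>)" unfolding Q_def by (simp add: algebra_simps)
    finally show ?thesis by simp
  qed
  have "\<bar>Bb\<^sup>2 / Q * (Jf \<rho> - \<rho>)\<bar> = Bb\<^sup>2 / Q * \<bar>Jf \<rho> - \<rho>\<bar>" using Qp by (simp add: abs_mult)
  also have "\<dots> \<le> Bb\<^sup>2 / Q * 2"
    by (rule mult_left_mono) (use J r Qp in auto)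
  finally have "\<bar>c_const sp sm * K1 sp sm \<rho> - \<rho>\<bar> \<le> Bb\<^sup>2 / Q * 2" unfolding e .
  then show ?thesis unfolding A_def[symmetric] Bb_def[symmetric] Q_def[symmetric] by (simp only: mult.commute)
qed

lemma V_cs:
  assumes "c \<ge> 0"
  shows "(Vmat n c X p q)\<^sup>2 \<le> Vmat n c X p p * Vmat n c X q q" and "0 \<le> Vmat n c X p p"
proof -
  have "(Vmat n c X p q)\<^sup>2 = (c / real n)\<^sup>2 * (\<Sum>i<n. X p i * X q i)\<^sup>2"
    unfolding Vmat_def by (simp only: power_mult_distrib)
  also have "\<dots> \<le> (c / real n)\<^sup>2 * ((\<Sum>i<n. (X p i)\<^sup>2) * (\<Sum>i<n. (X q i)\<^sup>2))"
    by (rule mult_left_mono[OF Cauchy_Schwarz_ineq_sum]) simp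
  also have "\<dots> = Vmat n c X p p * Vmat n c X q q"
    unfolding Vmat_def by (simp add: power2_eq_square algebra_simps)
  finally show "(Vmat n c X p q)\<^sup>2 \<le> Vmat n c X p p * Vmat n c X q q" .
  show "0 \<le> Vmat n c X p p" unfolding Vmat_def using assms
    by (rule_tac mult_nonneg_nonneg) (simp_all add: sum_nonneg)
qed

lemma part2:
  fixes cp cm :: real
  defines "K \<equiv> (cp - cm)\<^sup>2 + (\<bar>cp\<bar> + \<bar>cm\<bar> + 1)\<^sup>2"
  assumes n: "n > 0"
  defines "sp \<equiv> s_par n cp" and "sm \<equiv> s_par n cm"
  defines "c \<equiv> c_const sp sm"
  assumes bd: "Vmat n c X a a \<le> B" "Vmat n c X b b \<le> B" "Vmat n c X d d \<le> B" "Vmat n c X w w \<le> B"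
  shows "\<bar>Fterm n sp sm c X a b d w - (2 * Vmat n c X a d * Vmat n c X b w + 2 * Vmat n c X a w * Vmat n c X b d)\<bar>
     \<le> 8 * B\<^sup>2 * K / real n"
proof -
  define V where "V = Vmat n c X"
  have c0: "c \<ge> 0" unfolding c_def by (rule c_const_nonneg)
  have npos: "real n > 0" using n by simp
  have Kn: "0 \<le> 8 * B\<^sup>2 * K / real n" unfolding K_def using npos by simp
  define Q where "Q = ((sp + sm) / 2)\<^sup>2 + ((sp - sm) / 2)\<^sup>2"
  show ?thesis
  proof (cases "Q = 0")
    case True
    then have "c = 0" unfolding c_def c_const_eq Q_def by simp
    then have "V = (\<lambda>p q. 0)" unfolding V_def Vmat_def by (auto simp: fun_eq_iff)
    then show ?thesis using Kn unfolding Fterm_def Let_def V_def[symmetric] by simp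
  next
    case False
    then have Qp: "Q > 0" unfolding Q_def by (simp add: add_pos_nonneg less_le)
    define E where "E = 2 * (K / real n)"
    have fE: "\<bar>c * K1 sp sm \<rho> - \<rho>\<bar> \<le> E" if "\<bar>\<rho>\<bar> \<le> 1" for \<rho>
    proof -
      have "\<bar>c * K1 sp sm \<rho> - \<rho>\<bar> \<le> 2 * (((sp - sm) / 2)\<^sup>2 / Q)"
        unfolding c_def Q_def by (rule eps_bound[OF Qp[unfolded Q_def] that])
      also have "\<dots> \<le> E"
      proof -
        have "((sp - sm) / 2)\<^sup>2 / Q \<le> K / real n" unfolding K_def Q_def sp_def sm_def
          by (rule ratio_bound[OF n]) (use Qp[unfolded Q_def sp_def sm_def] in simp)
        then show ?thesis unfolding E_def by linarith
      qed
      finally show ?thesis .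
    qed
    have TB: "\<bar>V p q * sqrt (V r r * V s s) * c * K1 sp sm (rhomat n c X r s) - V p q * V r s\<bar> \<le> B * B * E"
      if bpqrs: "V p p \<le> B" "V q q \<le> B" "V r r \<le> B" "V s s \<le> B" for p q r s
    proof -
      have "\<bar>V p q * sqrt (V r r * V s s) * (\<lambda>\<rho>. c * K1 sp sm \<rho>) (V r s / sqrt (V r r * V s s)) - V p q * V r s\<bar> \<le> B * B * E"
      proof (rule termbound[where Vpp = "V p p" and Vqq = "V q q"])
        show "\<bar>(\<lambda>\<rho>. c * K1 sp sm \<rho>) \<rho> - \<rho>\<bar> \<le> E" if "\<bar>\<rho>\<bar> \<le> 1" for \<rho> using fE[OF that] by simp
        show "0 \<le> V p p" "0 \<le> V q q" "0 \<le> V r r" "0 \<le> V s s" unfolding V_def using V_cs(2)[OF c0] by auto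
        show "(V p q)\<^sup>2 \<le> V p p * V q q" "(V r s)\<^sup>2 \<le> V r r * V s s" unfolding V_def using V_cs(1)[OF c0] by auto
      qed (use bpqrs in auto)
      then show ?thesis unfolding rhomat_def V_def[symmetric] by (simp add: mult.assoc)
    qed
    have bds: "V a a \<le> B" "V b b \<le> B" "V d d \<le> B" "V w w \<le> B" using bd unfolding V_def by auto
    define T where "T = (\<lambda>p q r s. V p q * sqrt (V r r * V s s) * c * K1 sp sm (rhomat n c X r s) - V p q * V r s)"
    have eq: "Fterm n sp sm c X a b d w - (2 * V a d * V b w + 2 * V a w * V b d)
        = T a d b w + T a w b d + T b d a w + T b w a d"
      unfolding Fterm_def Let_def T_def V_def by (simp add: algebra_simps)
    have "\<bar>T a d b w + T a w b d + T b d a w + T b w a d\<bar> \<le> \<bar>T a d b w\<bar> + \<bar>T a w b d\<bar> + \<bar>T b d a w\<bar> + \<bar>T b w a d\<bar>"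
      by linarith
    also have "\<dots> \<le> B * B * E + B * B * E + B * B * E + B * B * E"
      unfolding T_def by (intro add_mono TB bds)
    also have "\<dots> = 8 * B\<^sup>2 * K / real n" unfolding E_def by (simp add: power2_eq_square)
    finally show ?thesis unfolding eq[unfolded V_def] by simp
  qed
qed


theorem lemmaB1:
  fixes cp cm :: real
  shows "(\<forall>n>0. \<forall>(X :: nat \<Rightarrow> nat \<Rightarrow> real) a b d w.
            let sp = s_par n cp; sm = s_par n cm; c = c_const sp sm in
            (\<integral>W. T1 n sp sm c X a b (fst W) (snd W) * T1 n sp sm c X d w (fst W) (snd W)
                 \<partial>(pair_measure (Wlaw n) (Wlaw n)))
            = Fterm n sp sm c X a b d w)
       \<and> (\<forall>B::real. \<exists>C::real. \<forall>n>0. \<forall>(X :: nat \<Rightarrow> nat \<Rightarrow> real) a b d w.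
            let sp = s_par n cp; sm = s_par n cm; c = c_const sp sm; V = Vmat n c X in
            (V a a \<le> B \<and> V b b \<le> B \<and> V d d \<le> B \<and> V w w \<le> B) \<longrightarrow>
            \<bar>Fterm n sp sm c X a b d w - (2 * V a d * V b w + 2 * V a w * V b d)\<bar> \<le> C / real n)"
proof (rule conjI)
  show "\<forall>n>0. \<forall>(X :: nat \<Rightarrow> nat \<Rightarrow> real) a b d w.
            let sp = s_par n cp; sm = s_par n cm; c = c_const sp sm in
            (\<integral>W. T1 n sp sm c X a b (fst W) (snd W) * T1 n sp sm c X d w (fst W) (snd W)
                 \<partial>(pair_measure (Wlaw n) (Wlaw n)))
            = Fterm n sp sm c X a b d w"
    unfolding Let_def using part1 c_const_nonneg by blast
  show "\<forall>B::real. \<exists>C::real. \<forall>n>0. \<forall>(X :: nat \<Rightarrow> nat \<Rightarrow> real) a b d w.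
            let sp = s_par n cp; sm = s_par n cm; c = c_const sp sm; V = Vmat n c X in
            (V a a \<le> B \<and> V b b \<le> B \<and> V d d \<le> B \<and> V w w \<le> B) \<longrightarrow>
            \<bar>Fterm n sp sm c X a b d w - (2 * V a d * V b w + 2 * V a w * V b d)\<bar> \<le> C / real n"
  proof
    fix B :: real
    show "\<exists>C::real. \<forall>n>0. \<forall>(X :: nat \<Rightarrow> nat \<Rightarrow> real) a b d w.
            let sp = s_par n cp; sm = s_par n cm; c = c_const sp sm; V = Vmat n c X in
            (V a a \<le> B \<and> V b b \<le> B \<and> V d d \<le> B \<and> V w w \<le> B) \<longrightarrow>
            \<bar>Fterm n sp sm c X a b d w - (2 * V a d * V b w + 2 * V a w * V b d)\<bar> \<le> C / real n"
    proof (rule exI[of _ "8 * B\<^sup>2 * ((cp - cm)\<^sup>2 + (\<bar>cp\<bar> + \<bar>cm\<bar> + 1)\<^sup>2)"], intro allI impI)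
      fix n :: nat and X :: "nat \<Rightarrow> nat \<Rightarrow> real" and a b d w
      assume n: "n > 0"
      show "let sp = s_par n cp; sm = s_par n cm; c = c_const sp sm; V = Vmat n c X in
            (V a a \<le> B \<and> V b b \<le> B \<and> V d d \<le> B \<and> V w w \<le> B) \<longrightarrow>
            \<bar>Fterm n sp sm c X a b d w - (2 * V a d * V b w + 2 * V a w * V b d)\<bar>
              \<le> 8 * B\<^sup>2 * ((cp - cm)\<^sup>2 + (\<bar>cp\<bar> + \<bar>cm\<bar> + 1)\<^sup>2) / real n"
        unfolding Let_def using part2[OF n, of cp cm X a B b d w] by blast
    qed
  qed
qed

end
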